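(* Let $(X,d)$ be a separable complete metric space, let $(\Omega,\mathsf{F},\mathbb{P})$ be a probability space with a filtration $(\mathsf{F}_n)_{n\in\mathbb{N}}$, and let $F:X\to[0,\infty]$ be measurable such that $\mathrm{zer}F:=\{z\in X\mid F(z)=0\}$ is closed and non-empty. Let $\phi:X\times X\to[0,\infty)$ be a Carath\'eodory distance which is uniformly consistent with a modulus $\theta:[0,\infty)\to[0,\infty)$ that is nondecreasing and convex with $\theta(0)=0$ and $\theta(\varepsilon)>0$ for $\varepsilon>0$. Let $(x_n)$ be an $X$-valued stochastic process adapted to $(\mathsf{F}_n)$ such that: (1) $(x_n)$ is strongly stochastically $\phi$-quasi-Fej\'er monotone w.r.t.\ $\mathrm{zer}F$ and $(\mathsf{F}_n)$ with error sequences $(\zeta_n),(\xi_n)\in\ell^1_+(\mathsf{F}_n)$, where $K>0$ satisfies $\prod_{n=0}^\infty(1+\zeta_n)<K$ almost surely, and $\chi:(0,\infty)\to\mathbb{N}$ satisfies $\sum_{n=\chi(\varepsilon)}^\infty\mathbb{E}[\xi_n]<\varepsilon$ for all $\varepsilon>0$; (2) $\varphi:(0,\infty)\times\mathbb{N}\to(0,\infty)$ is a $\liminf$-bound in mean for $(x_n)$ w.r.t.\ $F$, i.e.\ for all $\varepsilon>0$ and $N\in\mathbb{N}$ there exists $n\in\mathbb{N}$ with $N\le n\le\varphi(\varepsilon,N)$ and $\mathbb{E}[F(x_n)]<\varepsilon$. Finally, let $D$ be a collection of $X$-valued random variables with $x_n\in D$ for all $n$, and let $\tau:(0,\infty)\to(0,\infty)$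 be a modulus of $\phi$-regularity for $F$ in mean w.r.t.\ $D$. Then there is a $\mathrm{zer}F$-valued random variable $x$ such that $d(x_n,x)\to0$ in mean and almost surely, with rates \[\forall\varepsilon>0\ \forall n\ge\rho(\theta(\varepsilon/2))\ \big(\mathbb{E}[d(x_n,x)]<\varepsilon\big)\] and \[\forall\lambda,\varepsilon>0\ \big(\mathbb{P}(\exists n\ge\rho(\lambda\theta(\varepsilon/2))\,(d(x_n,x)\ge\varepsilon))<\lambda\big),\] where $\rho(\varepsilon):=\varphi\big(\tau(\varepsilon/3K),\chi(\varepsilon/3K)\big)$.
   Context: $X$ carries its Borel $\sigma$-algebra. A Carath\'eodory distance is a function $\phi:X\times X\to[0,\infty)$ that is continuous in its left argument and Borel measurable in its right argument. For non-empty $S\subseteq X$, $\mathrm{dist}^\phi_S(x):=\inf_{s\in S}\phi(s,x)$. $\phi$ is uniformly consistent with modulus $\theta$ if for all $\varepsilon>0$ and $x,y\in X$, $\phi(x,y)<\theta(\varepsilon)$ implies $d(x,y)<\varepsilon$. $\ell^1_+(\mathsf{F}_n)$ denotes the set of sequences $(\xi_n)$ of nonnegative random variables with $\xi_n$ $\mathsf{F}_n$-measurable and $\sum_n\xi_n<\infty$ a.s. A process $(x_n)$ adapted to $(\mathsf{F}_n)$ is strongly stochastically $\phi$-quasi-Fej\'er monotone w.r.t.\ $S\subseteq X$ and $(\mathsf{F}_n)$ with error sequences $(\zeta_n),(\xi_n)\in\ell^1_+(\mathsf{F}_n)$ if $\mathbb{E}[\phi(z,x_{n+1})\mid\mathsf{F}_n]\le(1+\zeta_n)\phi(z,x_n)+\xi_n$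 a.s.\ for all $n\in\mathbb{N}$ and all $X$-valued $\mathsf{F}_n$-measurable random variables $z$ with $z\in S$ a.s.\ and $\mathbb{E}[\phi(z,x_n)]<\infty$. A modulus of $\phi$-regularity for $F$ in mean w.r.t.\ $D$ is a function $\tau:(0,\infty)\to(0,\infty)$ such that for all $\varepsilon>0$ and all $x\in D$: $\mathbb{E}[F(x)]<\tau(\varepsilon)$ implies $\mathbb{E}[\mathrm{dist}^\phi_{\mathrm{zer}F}(x)]<\varepsilon$. *)

theory Defs
  imports "HOL-Probability.Probability"
begin

definition phi_dist :: "('a \<Rightarrow> 'a \<Rightarrow> real) \<Rightarrow> 'a set \<Rightarrow> 'a \<Rightarrow> real" where
  "phi_dist \<phi> S x = (INF s\<in>S. \<phi> s x)"

end

theory Submission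
  imports Defs
begin

locale T48 = prob_space M
  for M :: "'b measure" +
  fixes Fil :: "nat \<Rightarrow> 'b measure"
    and F :: "'a::polish_space \<Rightarrow> ennreal"
    and \<phi> :: "'a \<Rightarrow> 'a \<Rightarrow> real"
    and \<theta> :: "real \<Rightarrow> real"
    and x :: "nat \<Rightarrow> 'b \<Rightarrow> 'a"
    and \<zeta> \<xi> :: "nat \<Rightarrow> 'b \<Rightarrow> real"
    and K :: real
    and chi :: "real \<Rightarrow> nat"
    and \<Phi> :: "real \<Rightarrow> nat \<Rightarrow> real"
    and D :: "('b \<Rightarrow> 'a) set"
    and \<tau> :: "real \<Rightarrow> real"
  assumes filt_sub: "\<And>n. subalgebra M (Fil n)"
    and filt_mono: "\<And>m n. m \<le> n \<Longrightarrow> sets (Fil m) \<subseteq> sets (Fil n)"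
    and F_meas: "F \<in> borel_measurable borel"
    and zer_closed: "closed {z. F z = 0}"
    and zer_ne: "{z. F z = 0} \<noteq> {}"
    and phi_nonneg: "\<And>a b. \<phi> a b \<ge> 0"
    and phi_cont: "\<And>b. continuous_on UNIV (\<lambda>a. \<phi> a b)"
    and phi_meas: "\<And>a. (\<lambda>b. \<phi> a b) \<in> borel_measurable borel"
    and theta_nonneg: "\<And>e. e \<ge> 0 \<Longrightarrow> \<theta> e \<ge> 0"
    and theta_mono: "mono_on {0..} \<theta>"
    and theta_convex: "convex_on {0..} \<theta>"
    and theta_0: "\<theta> 0 = 0"
    and theta_pos: "\<And>e. e > 0 \<Longrightarrow> \<theta> e > 0"
    and consistent: "\<And>e a b. e > 0 \<Longrightarrow> \<phi> a b < \<theta> e \<Longrightarrow> dist a b < e"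
    and adapted: "\<And>n. x n \<in> measurable (Fil n) borel"
    and zeta_meas: "\<And>n. \<zeta> n \<in> borel_measurable (Fil n)"
    and zeta_nonneg: "\<And>n \<omega>. \<omega> \<in> space M \<Longrightarrow> \<zeta> n \<omega> \<ge> 0"
    and zeta_summable: "AE \<omega> in M. summable (\<lambda>n. \<zeta> n \<omega>)"
    and xi_meas: "\<And>n. \<xi> n \<in> borel_measurable (Fil n)"
    and xi_nonneg: "\<And>n \<omega>. \<omega> \<in> space M \<Longrightarrow> \<xi> n \<omega> \<ge> 0"
    and fejer: "\<And>n z. z \<in> measurable (Fil n) borel \<Longrightarrow> (AE \<omega> in M. F (z \<omega>) = 0) \<Longrightarrow>
        (\<integral>\<^sup>+ \<omega>. ennreal (\<phi> (z \<omega>) (x n \<omega>)) \<partial>M) < \<infinity> \<Longrightarrow>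
        AE \<omega> in M. nn_cond_exp M (Fil n) (\<lambda>\<omega>. ennreal (\<phi> (z \<omega>) (x (Suc n) \<omega>))) \<omega>
          \<le> ennreal ((1 + \<zeta> n \<omega>) * \<phi> (z \<omega>) (x n \<omega>) + \<xi> n \<omega>)"
    and K_pos: "K > 0"
    and K_bound: "AE \<omega> in M. (\<Prod>n. 1 + \<zeta> n \<omega>) < K"
    and chi: "\<And>e. e > 0 \<Longrightarrow> (\<Sum>n. \<integral>\<^sup>+ \<omega>. ennreal (\<xi> (n + chi e) \<omega>) \<partial>M) < ennreal e"
    and liminf_bound: "\<And>e N. e > 0 \<Longrightarrow>
        \<exists>n. N \<le> n \<and> real n \<le> \<Phi> e N \<and> (\<integral>\<^sup>+ \<omega>. F (x n \<omega>) \<partial>M) < ennreal e"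
    and x_in_D: "\<And>n. x n \<in> D"
    and tau_pos: "\<And>e. e > 0 \<Longrightarrow> \<tau> e > 0"
    and tau_reg: "\<And>e y. e > 0 \<Longrightarrow> y \<in> D \<Longrightarrow> (\<integral>\<^sup>+ \<omega>. F (y \<omega>) \<partial>M) < ennreal (\<tau> e) \<Longrightarrow>
        (\<integral>\<^sup>+ \<omega>. ennreal (phi_dist \<phi> {z. F z = 0} (y \<omega>)) \<partial>M) < ennreal e"
begin

abbreviation "S \<equiv> {z. F z = 0}"

lemma sub_le: "k \<le> m \<Longrightarrow> f \<in> measurable (Fil k) N \<Longrightarrow> f \<in> measurable (Fil m) N"
  by (rule measurable_from_subalg[of "Fil m" "Fil k"])
     (use filt_sub filt_mono in \<open>auto simp: subalgebra_def\<close>)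

lemma sub_M: "f \<in> measurable (Fil k) N \<Longrightarrow> f \<in> measurable M N"
  by (rule measurable_from_subalg[OF filt_sub])

lemma sfs: "sigma_finite_subalgebra M (Fil n)"
  by (rule finite_measure_subalgebra_is_sigma_finite)
     (simp add: finite_measure_subalgebra_def finite_measure_subalgebra_axioms_def filt_sub finite_measure_axioms)

definition T0 where "T0 = (SOME T. countable T \<and> T \<subseteq> S \<and> S \<subseteq> closure T)"
definition e :: "nat \<Rightarrow> 'a" where "e = from_nat_into T0"

lemma T0: "countable T0" "T0 \<subseteq> S" "S \<subseteq> closure T0"
proof -
  obtain T where "countable T" "T \<subseteq> S" "S \<subseteq> closure T" using separable[of S] by blast
  then have "\<exists>T. countable T \<and> T \<subseteq> S \<and> S \<subseteq> closure T" by blast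
  from someI_ex[OF this] show "countable T0" "T0 \<subseteq> S" "S \<subseteq> closure T0" unfolding T0_def by auto
qed

lemma T0_ne: "T0 \<noteq> {}"
  using T0(3) zer_ne by auto

lemma range_e: "range e = T0"
  unfolding e_def using T0(1) T0_ne by simp

lemma e_in_S: "e k \<in> S"
  using range_e T0(2) by auto

lemma approx: assumes "s \<in> S" "\<eta> > 0" shows "\<exists>k. \<phi> (e k) y < \<phi> s y + \<eta>"
proof -
  have "continuous_on UNIV (\<lambda>a. \<phi> a y)" by (rule phi_cont)
  then obtain d where d: "d > 0" "\<And>t. dist t s < d \<Longrightarrow> dist (\<phi> t y) (\<phi> s y) < \<eta>"
    using assms(2) unfolding continuous_on_iff by (metis UNIV_I)
  have "s \<in> closure (range e)" using assms(1) T0(3) range_e by auto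
  then obtain t where "t \<in> range e" "dist t s < d" using d(1) closure_approachable by metis
  then obtain k where "t = e k" by auto
  with d(2)[OF \<open>dist t s < d\<close>] have "\<phi> (e k) y < \<phi> s y + \<eta>" by (auto simp: dist_real_def)
  then show ?thesis by blast
qed

lemma pd_eq: "phi_dist \<phi> S y = (INF k. \<phi> (e k) y)"
proof (rule antisym)
  have bdd: "bdd_below ((\<lambda>s. \<phi> s y) ` S)" by (rule bdd_belowI[of _ 0]) (auto simp: phi_nonneg)
  show "phi_dist \<phi> S y \<le> (INF k. \<phi> (e k) y)"
    unfolding phi_dist_def by (rule cINF_greatest) (auto intro!: cINF_lower bdd e_in_S)
  have bdd2: "bdd_below (range (\<lambda>k. \<phi> (e k) y))" by (rule bdd_belowI[of _ 0]) (auto simp: phi_nonneg)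
  show "(INF k. \<phi> (e k) y) \<le> phi_dist \<phi> S y"
    unfolding phi_dist_def
  proof (rule cINF_greatest)
    show "S \<noteq> {}" by (rule zer_ne)
    fix s assume s: "s \<in> S"
    show "(INF k. \<phi> (e k) y) \<le> \<phi> s y"
    proof (rule field_le_epsilon)
      fix \<eta> :: real assume "\<eta> > 0"
      then obtain k where "\<phi> (e k) y < \<phi> s y + \<eta>" using approx[OF s] by blast
      moreover have "(INF k. \<phi> (e k) y) \<le> \<phi> (e k) y" by (rule cINF_lower[OF bdd2]) auto
      ultimately show "(INF k. \<phi> (e k) y) \<le> \<phi> s y + \<eta>" by simp
    qed
  qed
qed

lemma pd_meas[measurable]: assumes "f \<in> measurable N borel"
  shows "(\<lambda>\<omega>. phi_dist \<phi> S (f \<omega>)) \<in> borel_measurable N"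
proof -
  have [measurable]: "\<And>k. (\<lambda>\<omega>. \<phi> (e k) (f \<omega>)) \<in> borel_measurable N"
    using measurable_compose[OF assms phi_meas] by blast
  show ?thesis unfolding pd_eq by measurable
qed

lemma phiJ_meas[measurable]: assumes "J \<in> measurable N (count_space UNIV)" "f \<in> measurable N borel"
  shows "(\<lambda>\<omega>. \<phi> (e (J \<omega>)) (f \<omega>)) \<in> borel_measurable N"
proof (rule measurable_compose_countable[OF _ assms(1), where f="\<lambda>k \<omega>. \<phi> (e k) (f \<omega>)"])
  fix k show "(\<lambda>\<omega>. \<phi> (e k) (f \<omega>)) \<in> borel_measurable N"
    using measurable_compose[OF assms(2) phi_meas] by blast
qed

lemma eJ_meas[measurable]: assumes "J \<in> measurable N (count_space UNIV)"
  shows "(\<lambda>\<omega>. e (J \<omega>)) \<in> measurable N borel"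
  using measurable_compose[OF assms, of e borel] by auto

lemma selection:
  assumes "(\<integral>\<^sup>+ \<omega>. ennreal (phi_dist \<phi> S (x n \<omega>)) \<partial>M) < ennreal \<delta>"
  shows "\<exists>J \<in> measurable (Fil n) (count_space UNIV).
           (\<integral>\<^sup>+ \<omega>. ennreal (\<phi> (e (J \<omega>)) (x n \<omega>)) \<partial>M) < ennreal \<delta>"
proof -
  let ?pd = "\<lambda>\<omega>. phi_dist \<phi> S (x n \<omega>)"
  have pdnn: "?pd \<omega> \<ge> 0" for \<omega> unfolding pd_eq by (rule cINF_greatest) (auto simp: phi_nonneg)
  have [measurable]: "x n \<in> measurable (Fil n) borel" by (rule adapted)
  have [measurable]: "?pd \<in> borel_measurable (Fil n)" by measurable
  have [measurable]: "?pd \<in> borel_measurable M" by (rule sub_M) measurable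
  obtain r where r: "(\<integral>\<^sup>+ \<omega>. ennreal (?pd \<omega>) \<partial>M) = ennreal r" "r \<ge> 0"
    using assms by (cases "(\<integral>\<^sup>+ \<omega>. ennreal (?pd \<omega>) \<partial>M)") auto
  have "r < \<delta>" using assms r by (metis ennreal_less_iff ennreal_less_zero_iff not_less order_less_le_trans)
  define \<eta> where "\<eta> = (\<delta> - r) / 2"
  have \<eta>: "\<eta> > 0" using \<open>r < \<delta>\<close> by (simp add: \<eta>_def)
  define J where "J \<omega> = (LEAST j. \<phi> (e j) (x n \<omega>) < ?pd \<omega> + \<eta>)" for \<omega>
  have Jm: "J \<in> measurable (Fil n) (count_space UNIV)" unfolding J_def by measurable
  have ex: "\<exists>j. \<phi> (e j) (x n \<omega>) < ?pd \<omega> + \<eta>" for \<omega>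
  proof -
    have "(INF k. \<phi> (e k) (x n \<omega>)) < ?pd \<omega> + \<eta>" using \<eta> pd_eq by simp
    then show ?thesis by (subst (asm) cINF_less_iff) (auto intro!: bdd_belowI[of _ 0] simp: phi_nonneg)
  qed
  have Jle: "\<phi> (e (J \<omega>)) (x n \<omega>) \<le> ?pd \<omega> + \<eta>" for \<omega>
    unfolding J_def using LeastI_ex[OF ex[of \<omega>]] by simp
  have "(\<integral>\<^sup>+ \<omega>. ennreal (\<phi> (e (J \<omega>)) (x n \<omega>)) \<partial>M) \<le> (\<integral>\<^sup>+ \<omega>. ennreal (?pd \<omega>) + ennreal \<eta> \<partial>M)"
  proof (rule nn_integral_mono)
    fix \<omega>
    have "ennreal (\<phi> (e (J \<omega>)) (x n \<omega>)) \<le> ennreal (?pd \<omega> + \<eta>)" using Jle by (rule ennreal_leI)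
    also have "\<dots> = ennreal (?pd \<omega>) + ennreal \<eta>" using pdnn \<eta> by (intro ennreal_plus) auto
    finally show "ennreal (\<phi> (e (J \<omega>)) (x n \<omega>)) \<le> ennreal (?pd \<omega>) + ennreal \<eta>" .
  qed
  also have "\<dots> = ennreal r + ennreal \<eta>"
    by (subst nn_integral_add) (auto simp: r emeasure_space_1)
  also have "\<dots> = ennreal (r + \<eta>)" using r(2) \<eta> by (intro ennreal_plus[symmetric]) auto
  also have "\<dots> < ennreal \<delta>"
  proof (rule ennreal_lessI)
    show "0 < \<delta>" using r(2) \<open>r < \<delta>\<close> by linarith
    show "r + \<eta> < \<delta>" using \<open>r < \<delta>\<close> unfolding \<eta>_def by (simp add: field_simps)
  qed
  finally show ?thesis using Jm by blast
qed

definition P :: "nat \<Rightarrow> 'b \<Rightarrow> real" where "P k \<omega> = (\<Prod>j<k. 1 + \<zeta> j \<omega>)"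

lemma P_ge1: "\<omega> \<in> space M \<Longrightarrow> P k \<omega> \<ge> 1"
  unfolding P_def by (rule prod_ge_1) (auto simp: zeta_nonneg)

lemma P_pos: "\<omega> \<in> space M \<Longrightarrow> P k \<omega> > 0"
  using P_ge1[of \<omega> k] by simp

lemma P_Suc: "P (Suc k) \<omega> = P k \<omega> * (1 + \<zeta> k \<omega>)"
  unfolding P_def by simp

lemma P_meas: assumes "k \<le> Suc m" shows "P k \<in> borel_measurable (Fil m)"
  unfolding P_def
proof (rule borel_measurable_prod)
  fix j assume "j \<in> {..<k}"
  then have "j \<le> m" using assms by auto
  then have [measurable]: "\<zeta> j \<in> borel_measurable (Fil m)" by (rule sub_le[OF _ zeta_meas])
  show "(\<lambda>\<omega>. 1 + \<zeta> j \<omega>) \<in> borel_measurable (Fil m)" by measurable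
qed

lemma P_bound: "AE \<omega> in M. \<forall>k. P k \<omega> < K"
  using AE_space zeta_summable K_bound
proof eventually_elim
  case (elim \<omega>)
  let ?f = "\<lambda>j. 1 + \<zeta> j \<omega>"
  have "summable (\<lambda>j. norm (?f j - 1))" using elim zeta_nonneg by simp
  then have "abs_convergent_prod ?f" by (rule summable_imp_abs_convergent_prod)
  then have cp: "convergent_prod ?f" by (rule abs_convergent_prod_imp_convergent_prod)
  have lim: "(\<lambda>n. \<Prod>i\<le>n. ?f i) \<longlonglongrightarrow> prodinf ?f" by (rule convergent_prod_LIMSEQ[OF cp])
  have inc: "incseq (\<lambda>n. \<Prod>i\<le>n. ?f i)"
  proof (rule incseq_SucI)
    fix n
    have "(\<Prod>i\<le>n. ?f i) \<ge> 1" by (rule prod_ge_1) (use elim zeta_nonneg in auto)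
    moreover have "?f (Suc n) \<ge> 1" using elim zeta_nonneg by auto
    ultimately have "(\<Prod>i\<le>n. ?f i) * 1 \<le> (\<Prod>i\<le>n. ?f i) * ?f (Suc n)"
      by (intro mult_left_mono) auto
    then show "(\<Prod>i\<le>n. ?f i) \<le> (\<Prod>i\<le>Suc n. ?f i)"
      by (simp only: prod.atMost_Suc mult_1_right)
  qed
  show ?case
  proof
    fix k
    have "P k \<omega> \<le> P (Suc k) \<omega>"
    proof -
      have "P k \<omega> * 1 \<le> P k \<omega> * (1 + \<zeta> k \<omega>)"
        using P_ge1[OF elim(1), of k] zeta_nonneg[OF elim(1), of k] by (intro mult_left_mono) auto
      then show ?thesis by (simp only: P_Suc mult_1_right)
    qed
    also have "P (Suc k) \<omega> = (\<Prod>i\<le>k. ?f i)" unfolding P_def by (simp add: lessThan_Suc_atMost)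
    also have "\<dots> \<le> prodinf ?f" by (rule incseq_le[OF inc lim])
    also have "\<dots> < K" using elim by simp
    finally show "P k \<omega> < K" .
  qed
qed

lemma xi_tail: assumes "\<delta> > 0" "chi \<delta> \<le> n0"
  shows "(\<Sum>j. \<integral>\<^sup>+ \<omega>. ennreal (\<xi> (n0 + j) \<omega>) \<partial>M) \<le> (\<Sum>n. \<integral>\<^sup>+ \<omega>. ennreal (\<xi> (n + chi \<delta>) \<omega>) \<partial>M)"
proof -
  obtain t where t: "n0 = chi \<delta> + t" using assms(2) le_iff_add by blast
  let ?g = "\<lambda>n. \<integral>\<^sup>+ \<omega>. ennreal (\<xi> (n + chi \<delta>) \<omega>) \<partial>M"
  have "suminf ?g = (\<Sum>j. ?g (j + t)) + (\<Sum>j<t. ?g j)" by (rule suminf_offset) (rule summableI)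
  moreover have "(\<Sum>j. ?g (j + t)) = (\<Sum>j. \<integral>\<^sup>+ \<omega>. ennreal (\<xi> (n0 + j) \<omega>) \<partial>M)"
    unfolding t by (simp add: ac_simps)
  moreover have "(\<Sum>j. ?g (j + t)) \<le> (\<Sum>j. ?g (j + t)) + (\<Sum>j<t. ?g j)"
    by (rule add_increasing2) auto
  ultimately show ?thesis by simp
qed

end

locale T48J = T48 +
  fixes J and n0 :: nat
  assumes J_meas: "J \<in> measurable (Fil n0) (count_space UNIV)"
    and fin0: "(\<integral>\<^sup>+ \<omega>. ennreal (\<phi> (e (J \<omega>)) (x n0 \<omega>)) \<partial>M) < \<infinity>"
    and xi_fin: "\<And>j. n0 \<le> j \<Longrightarrow> (\<integral>\<^sup>+ \<omega>. ennreal (\<xi> j \<omega>) \<partial>M) < \<infinity>"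
begin

definition Y where
  "Y k \<omega> = ennreal (\<phi> (e (J \<omega>)) (x k \<omega>) / P k \<omega>)"

lemma J_m: "n0 \<le> m \<Longrightarrow> J \<in> measurable (Fil m) (count_space UNIV)"
  by (rule sub_le[OF _ J_meas])

lemma phiz_meas: "k \<le> m \<Longrightarrow> n0 \<le> m \<Longrightarrow> (\<lambda>\<omega>. \<phi> (e (J \<omega>)) (x k \<omega>)) \<in> borel_measurable (Fil m)"
  by (rule phiJ_meas[OF J_m sub_le[OF _ adapted]])

lemma Y_meas: assumes "k \<le> m" "n0 \<le> m" shows "Y k \<in> borel_measurable (Fil m)"
proof -
  have [measurable]: "(\<lambda>\<omega>. \<phi> (e (J \<omega>)) (x k \<omega>)) \<in> borel_measurable (Fil m)"
    using assms by (rule phiz_meas)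
  have [measurable]: "P k \<in> borel_measurable (Fil m)" using assms by (intro P_meas) auto
  show ?thesis unfolding Y_def by measurable
qed

lemma Y_M: "n0 \<le> k \<Longrightarrow> Y k \<in> borel_measurable M"
  by (rule sub_M[OF Y_meas]) auto

lemma phiz_M: "n0 \<le> k \<Longrightarrow> (\<lambda>\<omega>. \<phi> (e (J \<omega>)) (x k \<omega>)) \<in> borel_measurable M"
  by (rule sub_M[OF phiz_meas]) auto

lemma Y_le_phi: "\<omega> \<in> space M \<Longrightarrow> Y k \<omega> \<le> ennreal (\<phi> (e (J \<omega>)) (x k \<omega>))"
  unfolding Y_def
  by (intro ennreal_leI) (use divide_left_mono[of 1 "P k \<omega>" "\<phi> (e (J \<omega>)) (x k \<omega>)"] P_ge1[of \<omega> k] phi_nonneg in auto)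

lemma phi_le_KY: "AE \<omega> in M. \<forall>k. ennreal (\<phi> (e (J \<omega>)) (x k \<omega>)) \<le> ennreal K * Y k \<omega>"
  using AE_space P_bound
proof eventually_elim
  case (elim \<omega>)
  show ?case
  proof
    fix k
    let ?a = "\<phi> (e (J \<omega>)) (x k \<omega>)" and ?p = "P k \<omega>"
    have p: "?p > 0" "?p < K" using P_pos[OF elim(1)] elim(2) by auto
    have "?a = (?a / ?p) * ?p" using p by simp
    also have "\<dots> \<le> (?a / ?p) * K" using p phi_nonneg by (intro mult_left_mono) auto
    finally have "?a \<le> K * (?a / ?p)" by (simp add: mult.commute)
    then have "ennreal ?a \<le> ennreal (K * (?a / ?p))" by (rule ennreal_leI)
    also have "\<dots> = ennreal K * Y k \<omega>" unfolding Y_def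
      using K_pos p phi_nonneg by (intro ennreal_mult) auto
    finally show "ennreal ?a \<le> ennreal K * Y k \<omega>" .
  qed
qed

lemma STEP:
  assumes m: "n0 \<le> m" and A: "A \<in> sets (Fil m)"
    and fin: "(\<integral>\<^sup>+ \<omega>. ennreal (\<phi> (e (J \<omega>)) (x m \<omega>)) \<partial>M) < \<infinity>"
  shows "(\<integral>\<^sup>+ \<omega>. indicator A \<omega> * Y (Suc m) \<omega> \<partial>M)
     \<le> (\<integral>\<^sup>+ \<omega>. indicator A \<omega> * Y m \<omega> \<partial>M) + (\<integral>\<^sup>+ \<omega>. ennreal (\<xi> m \<omega>) \<partial>M)"
proof -
  interpret sigma_finite_subalgebra M "Fil m" by (rule sfs)
  define g where "g \<omega> = indicator A \<omega> * ennreal (1 / P (Suc m) \<omega>)" for \<omega>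
  have [measurable]: "P (Suc m) \<in> borel_measurable (Fil m)" by (rule P_meas) simp
  have [measurable]: "A \<in> sets (Fil m)" by (rule A)
  have [measurable]: "A \<in> sets M" using A filt_sub[of m] by (auto simp: subalgebra_def)
  have gm[measurable]: "g \<in> borel_measurable (Fil m)" unfolding g_def by measurable
  have [measurable]: "(\<lambda>\<omega>. \<phi> (e (J \<omega>)) (x (Suc m) \<omega>)) \<in> borel_measurable M"
    by (rule phiz_M) (use m in auto)
  have [measurable]: "\<xi> m \<in> borel_measurable M" by (rule sub_M[OF xi_meas])
  have [measurable]: "Y m \<in> borel_measurable M" by (rule Y_M) (rule m)
  have fe: "AE \<omega> in M. nn_cond_exp M (Fil m) (\<lambda>\<omega>. ennreal (\<phi> (e (J \<omega>)) (x (Suc m) \<omega>))) \<omega>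
      \<le> ennreal ((1 + \<zeta> m \<omega>) * \<phi> (e (J \<omega>)) (x m \<omega>) + \<xi> m \<omega>)"
    using fejer[of "\<lambda>\<omega>. e (J \<omega>)" m] eJ_meas[OF J_m[OF m]] e_in_S fin by auto
  have "(\<integral>\<^sup>+ \<omega>. indicator A \<omega> * Y (Suc m) \<omega> \<partial>M)
      = (\<integral>\<^sup>+ \<omega>. g \<omega> * ennreal (\<phi> (e (J \<omega>)) (x (Suc m) \<omega>)) \<partial>M)"
  proof (rule nn_integral_cong)
    fix \<omega> assume "\<omega> \<in> space M"
    then have pos: "P (Suc m) \<omega> > 0" by (rule P_pos)
    have "ennreal (1 / P (Suc m) \<omega>) * ennreal (\<phi> (e (J \<omega>)) (x (Suc m) \<omega>))
        = ennreal (\<phi> (e (J \<omega>)) (x (Suc m) \<omega>) / P (Suc m) \<omega>)"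
      using pos by (subst ennreal_mult[symmetric]) (auto simp: phi_nonneg)
    then show "indicator A \<omega> * Y (Suc m) \<omega> = g \<omega> * ennreal (\<phi> (e (J \<omega>)) (x (Suc m) \<omega>))"
      unfolding g_def Y_def by (simp add: mult.assoc)
  qed
  also have "\<dots> = (\<integral>\<^sup>+ \<omega>. g \<omega> * nn_cond_exp M (Fil m) (\<lambda>\<omega>. ennreal (\<phi> (e (J \<omega>)) (x (Suc m) \<omega>))) \<omega> \<partial>M)"
    by (rule nn_cond_exp_intg[symmetric]) measurable
  also have "\<dots> \<le> (\<integral>\<^sup>+ \<omega>. g \<omega> * ennreal ((1 + \<zeta> m \<omega>) * \<phi> (e (J \<omega>)) (x m \<omega>) + \<xi> m \<omega>) \<partial>M)"
  proof (rule nn_integral_mono_AE)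
    show "AE \<omega> in M. g \<omega> * nn_cond_exp M (Fil m) (\<lambda>\<omega>. ennreal (\<phi> (e (J \<omega>)) (x (Suc m) \<omega>))) \<omega>
      \<le> g \<omega> * ennreal ((1 + \<zeta> m \<omega>) * \<phi> (e (J \<omega>)) (x m \<omega>) + \<xi> m \<omega>)"
      using fe by eventually_elim (rule mult_left_mono, auto)
  qed
  also have "\<dots> \<le> (\<integral>\<^sup>+ \<omega>. indicator A \<omega> * Y m \<omega> + ennreal (\<xi> m \<omega>) \<partial>M)"
  proof (rule nn_integral_mono)
    fix \<omega> assume \<omega>: "\<omega> \<in> space M"
    let ?a = "\<phi> (e (J \<omega>)) (x m \<omega>)" and ?p = "P m \<omega>" and ?z = "\<zeta> m \<omega>" and ?x = "\<xi> m \<omega>"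
    have p: "?p \<ge> 1" by (rule P_ge1[OF \<omega>])
    have z: "?z \<ge> 0" "?x \<ge> 0" using \<omega> zeta_nonneg xi_nonneg by auto
    have a: "?a \<ge> 0" by (rule phi_nonneg)
    have ps: "P (Suc m) \<omega> = ?p * (1 + ?z)" by (rule P_Suc)
    have ps1: "?p * (1 + ?z) \<ge> 1" using mult_mono[of 1 ?p 1 "1 + ?z"] p z by simp
    have "((1 + ?z) * ?a + ?x) / (?p * (1 + ?z)) = ?a / ?p + ?x / (?p * (1 + ?z))"
      using p z by (simp add: add_divide_distrib)
    also have "?x / (?p * (1 + ?z)) \<le> ?x"
      using ps1 z by (simp add: divide_le_eq mult_le_cancel_left1)
    finally have key: "((1 + ?z) * ?a + ?x) / P (Suc m) \<omega> \<le> ?a / ?p + ?x" unfolding ps by simp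
    show "g \<omega> * ennreal ((1 + ?z) * ?a + ?x) \<le> indicator A \<omega> * Y m \<omega> + ennreal ?x"
    proof (cases "\<omega> \<in> A")
      case True
      have v: "(1 + ?z) * ?a + ?x \<ge> 0" using z a by simp
      have ps0: "1 / P (Suc m) \<omega> \<ge> 0" using ps ps1 by simp
      have "g \<omega> * ennreal ((1 + ?z) * ?a + ?x) = ennreal (1 / P (Suc m) \<omega>) * ennreal ((1 + ?z) * ?a + ?x)"
        unfolding g_def using True by simp
      also have "\<dots> = ennreal (1 / P (Suc m) \<omega> * ((1 + ?z) * ?a + ?x))"
        by (rule ennreal_mult[symmetric, OF ps0 v])
      also have "\<dots> = ennreal (((1 + ?z) * ?a + ?x) / P (Suc m) \<omega>)" by simp
      also have "\<dots> \<le> ennreal (?a / ?p + ?x)" using key by (rule ennreal_leI)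
      also have "\<dots> = ennreal (?a / ?p) + ennreal ?x" using p z a by (intro ennreal_plus) auto
      finally show ?thesis using True unfolding Y_def by simp
    qed (simp add: g_def)
  qed
  also have "\<dots> = (\<integral>\<^sup>+ \<omega>. indicator A \<omega> * Y m \<omega> \<partial>M) + (\<integral>\<^sup>+ \<omega>. ennreal (\<xi> m \<omega>) \<partial>M)"
    by (rule nn_integral_add) measurable
  finally show ?thesis .
qed


definition Q where
  "Q c m \<omega> = (if \<exists>k. n0 \<le> k \<and> k \<le> m \<and> c \<le> Y k \<omega> then c else Y m \<omega>)"

definition R where
  "R d = (\<integral>\<^sup>+ \<omega>. Y n0 \<omega> \<partial>M) + (\<Sum>j<d. \<integral>\<^sup>+ \<omega>. ennreal (\<xi> (n0 + j) \<omega>) \<partial>M)"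

definition Rtot where
  "Rtot = (\<integral>\<^sup>+ \<omega>. Y n0 \<omega> \<partial>M) + (\<Sum>j. \<integral>\<^sup>+ \<omega>. ennreal (\<xi> (n0 + j) \<omega>) \<partial>M)"

lemma Y0_fin: "(\<integral>\<^sup>+ \<omega>. Y n0 \<omega> \<partial>M) < \<infinity>"
proof -
  have "(\<integral>\<^sup>+ \<omega>. Y n0 \<omega> \<partial>M) \<le> (\<integral>\<^sup>+ \<omega>. ennreal (\<phi> (e (J \<omega>)) (x n0 \<omega>)) \<partial>M)"
    by (rule nn_integral_mono) (rule Y_le_phi)
  then show ?thesis using fin0 by (simp add: le_less_trans)
qed

lemma R_fin: "R d < \<infinity>"
proof -
  have "(\<Sum>j<d. \<integral>\<^sup>+ \<omega>. ennreal (\<xi> (n0 + j) \<omega>) \<partial>M) < \<infinity>"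
    using xi_fin by (simp add: less_top)
  then show ?thesis unfolding R_def using Y0_fin by simp
qed

lemma R_le: "R d \<le> Rtot"
  unfolding R_def Rtot_def
  by (intro add_left_mono sum_le_suminf summableI) auto

lemma Y_sets: assumes "k \<le> m" "n0 \<le> m" shows "{\<omega> \<in> space M. c \<le> Y k \<omega>} \<in> sets (Fil m)"
proof -
  have [measurable]: "Y k \<in> borel_measurable (Fil m)" using assms by (rule Y_meas)
  have "{\<omega> \<in> space (Fil m). c \<le> Y k \<omega>} \<in> sets (Fil m)" by measurable
  moreover have "space (Fil m) = space M" using filt_sub[of m] by (simp add: subalgebra_def)
  ultimately show ?thesis by simp
qed

lemma B_sets: assumes "n0 \<le> m"
  shows "{\<omega> \<in> space M. \<exists>k. n0 \<le> k \<and> k \<le> m \<and> c \<le> Y k \<omega>} \<in> sets (Fil m)"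
proof -
  have "{\<omega> \<in> space M. \<exists>k. n0 \<le> k \<and> k \<le> m \<and> c \<le> Y k \<omega>} = (\<Union>k\<in>{n0..m}. {\<omega> \<in> space M. c \<le> Y k \<omega>})"
    by auto
  also have "\<dots> \<in> sets (Fil m)" using assms by (intro sets.finite_UN Y_sets) auto
  finally show ?thesis .
qed

lemma main: "\<forall>c. (\<integral>\<^sup>+ \<omega>. Q c (n0 + d) \<omega> \<partial>M) \<le> R d"
proof (induction d)
  case 0
  show ?case
  proof
    fix c
    have "(\<integral>\<^sup>+ \<omega>. Q c (n0 + 0) \<omega> \<partial>M) \<le> (\<integral>\<^sup>+ \<omega>. Y n0 \<omega> \<partial>M)"
    proof (rule nn_integral_mono)
      fix \<omega> show "Q c (n0 + 0) \<omega> \<le> Y n0 \<omega>" unfolding Q_def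
        by (auto simp: le_antisym)
    qed
    then show "(\<integral>\<^sup>+ \<omega>. Q c (n0 + 0) \<omega> \<partial>M) \<le> R 0" by (simp add: R_def)
  qed
next
  case (Suc d)
  define m where "m = n0 + d"
  have m: "n0 \<le> m" by (simp add: m_def)
  have [measurable]: "Y m \<in> borel_measurable M" "Y (Suc m) \<in> borel_measurable M"
    using m by (auto intro!: Y_M)
  have "(\<integral>\<^sup>+ \<omega>. Y m \<omega> \<partial>M) = (\<integral>\<^sup>+ \<omega>. Q top m \<omega> \<partial>M)"
    by (rule nn_integral_cong) (simp add: Q_def Y_def top_unique)
  also have "\<dots> \<le> R d" using Suc.IH m_def by simp
  finally have Yfin: "(\<integral>\<^sup>+ \<omega>. Y m \<omega> \<partial>M) < \<infinity>" using R_fin[of d] by (simp add: le_less_trans)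
  have "(\<integral>\<^sup>+ \<omega>. ennreal (\<phi> (e (J \<omega>)) (x m \<omega>)) \<partial>M) \<le> (\<integral>\<^sup>+ \<omega>. ennreal K * Y m \<omega> \<partial>M)"
    by (rule nn_integral_mono_AE) (use phi_le_KY in \<open>auto elim: eventually_mono\<close>)
  also have "\<dots> = ennreal K * (\<integral>\<^sup>+ \<omega>. Y m \<omega> \<partial>M)" by (rule nn_integral_cmult) measurable
  also have "\<dots> < \<infinity>" using Yfin by (simp add: ennreal_mult_less_top)
  finally have fin: "(\<integral>\<^sup>+ \<omega>. ennreal (\<phi> (e (J \<omega>)) (x m \<omega>)) \<partial>M) < \<infinity>" .
  show ?case
  proof
    fix c
    define B where "B = {\<omega> \<in> space M. \<exists>k. n0 \<le> k \<and> k \<le> m \<and> c \<le> Y k \<omega>}"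
    have BF: "B \<in> sets (Fil m)" unfolding B_def using m by (rule B_sets)
    have spF: "space (Fil m) = space M" using filt_sub[of m] by (simp add: subalgebra_def)
    have BcF: "space M - B \<in> sets (Fil m)" using BF spF by (metis sets.compl_sets)
    have [measurable]: "B \<in> sets M" "space M - B \<in> sets M"
      using BF BcF filt_sub[of m] by (auto simp: subalgebra_def)
    have "(\<integral>\<^sup>+ \<omega>. Q c (n0 + Suc d) \<omega> \<partial>M)
        \<le> (\<integral>\<^sup>+ \<omega>. indicator B \<omega> * c + indicator (space M - B) \<omega> * Y (Suc m) \<omega> \<partial>M)"
    proof (rule nn_integral_mono)
      fix \<omega> assume \<omega>: "\<omega> \<in> space M"
      show "Q c (n0 + Suc d) \<omega> \<le> indicator B \<omega> * c + indicator (space M - B) \<omega> * Y (Suc m) \<omega>"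
      proof (cases "\<omega> \<in> B")
        case True
        then have "\<exists>k. n0 \<le> k \<and> k \<le> Suc m \<and> c \<le> Y k \<omega>" unfolding B_def by force
        then show ?thesis using True by (simp add: Q_def m_def)
      next
        case False
        then have nB: "\<not> (\<exists>k. n0 \<le> k \<and> k \<le> m \<and> c \<le> Y k \<omega>)" using \<omega> unfolding B_def by auto
        have "Q c (Suc m) \<omega> \<le> Y (Suc m) \<omega>"
          unfolding Q_def using nB by (auto simp: le_Suc_eq)
        then show ?thesis using False \<omega> by (simp add: m_def)
      qed
    qed
    also have "\<dots> = (\<integral>\<^sup>+ \<omega>. indicator B \<omega> * c \<partial>M) + (\<integral>\<^sup>+ \<omega>. indicator (space M - B) \<omega> * Y (Suc m) \<omega> \<partial>M)"
      by (rule nn_integral_add) measurable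
    also have "\<dots> \<le> (\<integral>\<^sup>+ \<omega>. indicator B \<omega> * c \<partial>M) + ((\<integral>\<^sup>+ \<omega>. indicator (space M - B) \<omega> * Y m \<omega> \<partial>M)
        + (\<integral>\<^sup>+ \<omega>. ennreal (\<xi> m \<omega>) \<partial>M))"
      by (intro add_left_mono STEP m BcF fin)
    also have "\<dots> = (\<integral>\<^sup>+ \<omega>. indicator B \<omega> * c + indicator (space M - B) \<omega> * Y m \<omega> \<partial>M)
        + (\<integral>\<^sup>+ \<omega>. ennreal (\<xi> m \<omega>) \<partial>M)"
      by (subst nn_integral_add) (auto simp: add.assoc)
    also have "(\<integral>\<^sup>+ \<omega>. indicator B \<omega> * c + indicator (space M - B) \<omega> * Y m \<omega> \<partial>M)
        = (\<integral>\<^sup>+ \<omega>. Q c (n0 + d) \<omega> \<partial>M)"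
    proof (rule nn_integral_cong)
      fix \<omega> assume \<omega>: "\<omega> \<in> space M"
      show "indicator B \<omega> * c + indicator (space M - B) \<omega> * Y m \<omega> = Q c (n0 + d) \<omega>"
        using \<omega> unfolding B_def Q_def m_def by auto
    qed
    also have "(\<integral>\<^sup>+ \<omega>. Q c (n0 + d) \<omega> \<partial>M) + (\<integral>\<^sup>+ \<omega>. ennreal (\<xi> m \<omega>) \<partial>M) \<le> R (Suc d)"
      using Suc.IH unfolding R_def m_def by (simp add: add.assoc add_right_mono)
    finally show "(\<integral>\<^sup>+ \<omega>. Q c (n0 + Suc d) \<omega> \<partial>M) \<le> R (Suc d)" by simp
  qed
qed

lemma Y_mean: assumes "n0 \<le> m" shows "(\<integral>\<^sup>+ \<omega>. Y m \<omega> \<partial>M) \<le> Rtot"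
proof -
  obtain d where d: "m = n0 + d" using assms le_iff_add by blast
  have "(\<integral>\<^sup>+ \<omega>. Y m \<omega> \<partial>M) = (\<integral>\<^sup>+ \<omega>. Q top (n0 + d) \<omega> \<partial>M)"
    by (rule nn_integral_cong) (simp add: Q_def Y_def d top_unique)
  also have "\<dots> \<le> R d" using main by blast
  also have "\<dots> \<le> Rtot" by (rule R_le)
  finally show ?thesis .
qed

lemma phi_mean: assumes "n0 \<le> m"
  shows "(\<integral>\<^sup>+ \<omega>. ennreal (\<phi> (e (J \<omega>)) (x m \<omega>)) \<partial>M) \<le> ennreal K * Rtot"
proof -
  have [measurable]: "Y m \<in> borel_measurable M" using assms by (rule Y_M)
  have "(\<integral>\<^sup>+ \<omega>. ennreal (\<phi> (e (J \<omega>)) (x m \<omega>)) \<partial>M) \<le> (\<integral>\<^sup>+ \<omega>. ennreal K * Y m \<omega> \<partial>M)"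
    by (rule nn_integral_mono_AE) (use phi_le_KY in \<open>auto elim: eventually_mono\<close>)
  also have "\<dots> = ennreal K * (\<integral>\<^sup>+ \<omega>. Y m \<omega> \<partial>M)" by (rule nn_integral_cmult) measurable
  also have "\<dots> \<le> ennreal K * Rtot" using Y_mean[OF assms] by (rule mult_left_mono) simp
  finally show ?thesis .
qed

lemma maxineq: assumes c: "c > 0"
  shows "ennreal (c / K) * emeasure M {\<omega> \<in> space M. \<exists>m\<ge>n0. c \<le> \<phi> (e (J \<omega>)) (x m \<omega>)} \<le> Rtot"
proof -
  define c' where "c' = ennreal (c / K)"
  define B where "B d = {\<omega> \<in> space M. \<exists>k. n0 \<le> k \<and> k \<le> n0 + d \<and> c' \<le> Y k \<omega>}" for d
  have BM: "B d \<in> sets M" for d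
  proof -
    have "B d \<in> sets (Fil (n0 + d))" unfolding B_def by (rule B_sets) simp
    then show ?thesis using filt_sub[of "n0 + d"] unfolding subalgebra_def by blast
  qed
  have inc: "incseq B"
  proof (rule incseq_SucI)
    fix d show "B d \<subseteq> B (Suc d)" unfolding B_def by fastforce
  qed
  have Bd: "c' * emeasure M (B d) \<le> Rtot" for d
  proof -
    have "c' * emeasure M (B d) = (\<integral>\<^sup>+ \<omega>. c' * indicator (B d) \<omega> \<partial>M)"
      by (rule nn_integral_cmult_indicator[symmetric]) (rule BM)
    also have "\<dots> \<le> (\<integral>\<^sup>+ \<omega>. Q c' (n0 + d) \<omega> \<partial>M)"
      by (rule nn_integral_mono) (auto simp: B_def Q_def indicator_def)
    also have "\<dots> \<le> R d" using main by blast
    also have "\<dots> \<le> Rtot" by (rule R_le)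
    finally show ?thesis .
  qed
  have "c' * emeasure M (\<Union>d. B d) = c' * (SUP d. emeasure M (B d))"
    using BM inc by (subst SUP_emeasure_incseq) auto
  also have "\<dots> = (SUP d. c' * emeasure M (B d))" by (rule SUP_mult_left_ennreal)
  also have "\<dots> \<le> Rtot" using Bd by (rule SUP_least)
  finally have U: "c' * emeasure M (\<Union>d. B d) \<le> Rtot" .
  have "emeasure M {\<omega> \<in> space M. \<exists>m\<ge>n0. c \<le> \<phi> (e (J \<omega>)) (x m \<omega>)} \<le> emeasure M (\<Union>d. B d)"
  proof (rule emeasure_mono_AE)
    show "(\<Union>d. B d) \<in> sets M" using BM by auto
    show "AE \<omega> in M. \<omega> \<in> {\<omega> \<in> space M. \<exists>m\<ge>n0. c \<le> \<phi> (e (J \<omega>)) (x m \<omega>)} \<longrightarrow> \<omega> \<in> (\<Union>d. B d)"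
      using P_bound
    proof eventually_elim
      case (elim \<omega>)
      show ?case
      proof
        assume "\<omega> \<in> {\<omega> \<in> space M. \<exists>m\<ge>n0. c \<le> \<phi> (e (J \<omega>)) (x m \<omega>)}"
        then obtain m where \<omega>: "\<omega> \<in> space M" and mm: "m \<ge> n0" "c \<le> \<phi> (e (J \<omega>)) (x m \<omega>)" by auto
        have p: "P m \<omega> > 0" "P m \<omega> < K" using P_pos[OF \<omega>] elim by auto
        have "c / K \<le> \<phi> (e (J \<omega>)) (x m \<omega>) / K" using mm K_pos by (simp add: divide_right_mono)
        also have "\<dots> \<le> \<phi> (e (J \<omega>)) (x m \<omega>) / P m \<omega>"
          using p phi_nonneg by (intro divide_left_mono) auto
        finally have "c' \<le> Y m \<omega>" unfolding c'_def Y_def by (rule ennreal_leI)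
        then have "\<omega> \<in> B (m - n0)" unfolding B_def using \<omega> mm by auto
        then show "\<omega> \<in> (\<Union>d. B d)" by blast
      qed
    qed
  qed
  then have "c' * emeasure M {\<omega> \<in> space M. \<exists>m\<ge>n0. c \<le> \<phi> (e (J \<omega>)) (x m \<omega>)} \<le> c' * emeasure M (\<Union>d. B d)"
    by (rule mult_left_mono) simp
  with U show ?thesis unfolding c'_def by simp
qed

end


context T48
begin

lemma core: assumes \<delta>: "\<delta> > 0"
  shows "\<exists>J n0 s. J \<in> measurable M (count_space UNIV) \<and> chi \<delta> \<le> n0 \<and> real n0 \<le> \<Phi> (\<tau> \<delta>) (chi \<delta>)
    \<and> 0 \<le> s \<and> s < 2 * \<delta>
    \<and> (\<forall>m\<ge>n0. (\<integral>\<^sup>+ \<omega>. ennreal (\<phi> (e (J \<omega>)) (x m \<omega>)) \<partial>M) \<le> ennreal (K * s))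
    \<and> (\<forall>c>0. measure M {\<omega> \<in> space M. \<exists>m\<ge>n0. c \<le> \<phi> (e (J \<omega>)) (x m \<omega>)} \<le> K * s / c)"
proof -
  obtain n0 where n0: "chi \<delta> \<le> n0" "real n0 \<le> \<Phi> (\<tau> \<delta>) (chi \<delta>)"
    "(\<integral>\<^sup>+ \<omega>. F (x n0 \<omega>) \<partial>M) < ennreal (\<tau> \<delta>)"
    using liminf_bound[OF tau_pos[OF \<delta>], of "chi \<delta>"] by blast
  have "(\<integral>\<^sup>+ \<omega>. ennreal (phi_dist \<phi> S (x n0 \<omega>)) \<partial>M) < ennreal \<delta>"
    by (rule tau_reg[OF \<delta> x_in_D n0(3)])
  then obtain J where J: "J \<in> measurable (Fil n0) (count_space UNIV)"
    and J0: "(\<integral>\<^sup>+ \<omega>. ennreal (\<phi> (e (J \<omega>)) (x n0 \<omega>)) \<partial>M) < ennreal \<delta>"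
    using selection by blast
  have tail: "(\<Sum>j. \<integral>\<^sup>+ \<omega>. ennreal (\<xi> (n0 + j) \<omega>) \<partial>M) < ennreal \<delta>"
    using xi_tail[OF \<delta> n0(1)] chi[OF \<delta>] by (rule le_less_trans)
  have xf: "(\<integral>\<^sup>+ \<omega>. ennreal (\<xi> j \<omega>) \<partial>M) < \<infinity>" if "n0 \<le> j" for j
  proof -
    have "(\<integral>\<^sup>+ \<omega>. ennreal (\<xi> (n0 + (j - n0)) \<omega>) \<partial>M) < ennreal \<delta>"
      using tail by (rule ennreal_suminf_lessD)
    then have "(\<integral>\<^sup>+ \<omega>. ennreal (\<xi> j \<omega>) \<partial>M) < ennreal \<delta>" using that by simp
    then show ?thesis using ennreal_less_top[of \<delta>] by (metis infinity_ennreal_def less_trans)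
  qed
  interpret T: T48J M Fil F \<phi> \<theta> x \<zeta> \<xi> K chi \<Phi> D \<tau> J n0
  proof unfold_locales
    show "J \<in> Fil n0 \<rightarrow>\<^sub>M count_space UNIV" by (rule J)
    show "(\<integral>\<^sup>+ \<omega>. ennreal (\<phi> (e (J \<omega>)) (x n0 \<omega>)) \<partial>M) < \<infinity>"
      using J0 ennreal_less_top[of \<delta>] by (metis infinity_ennreal_def less_trans)
    show "\<And>j. n0 \<le> j \<Longrightarrow> (\<integral>\<^sup>+ \<omega>. ennreal (\<xi> j \<omega>) \<partial>M) < \<infinity>" by (rule xf)
  qed
  have "T.Rtot \<le> (\<integral>\<^sup>+ \<omega>. ennreal (\<phi> (e (J \<omega>)) (x n0 \<omega>)) \<partial>M) + (\<Sum>j. \<integral>\<^sup>+ \<omega>. ennreal (\<xi> (n0 + j) \<omega>) \<partial>M)"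
    unfolding T.Rtot_def by (intro add_right_mono nn_integral_mono T.Y_le_phi)
  moreover obtain a where a: "(\<integral>\<^sup>+ \<omega>. ennreal (\<phi> (e (J \<omega>)) (x n0 \<omega>)) \<partial>M) = ennreal a" "0 \<le> a" "a < \<delta>"
    using J0 by (cases "(\<integral>\<^sup>+ \<omega>. ennreal (\<phi> (e (J \<omega>)) (x n0 \<omega>)) \<partial>M)") (auto simp: ennreal_less_iff)
  moreover obtain b where b: "(\<Sum>j. \<integral>\<^sup>+ \<omega>. ennreal (\<xi> (n0 + j) \<omega>) \<partial>M) = ennreal b" "0 \<le> b" "b < \<delta>"
    using tail by (cases "(\<Sum>j. \<integral>\<^sup>+ \<omega>. ennreal (\<xi> (n0 + j) \<omega>) \<partial>M)") (auto simp: ennreal_less_iff)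
  ultimately have Rle: "T.Rtot \<le> ennreal (a + b)" by (simp add: ennreal_plus)
  define s where "s = enn2real T.Rtot"
  have Rs: "T.Rtot = ennreal s" unfolding s_def using Rle by (cases T.Rtot) (auto simp: top_unique)
  have s0: "0 \<le> s" unfolding s_def by simp
  have "s \<le> a + b" using Rle[unfolded Rs] a(2) b(2) by (subst (asm) ennreal_le_iff) auto
  then have s2: "s < 2 * \<delta>" using a(3) b(3) by linarith
  have mean: "\<forall>m\<ge>n0. (\<integral>\<^sup>+ \<omega>. ennreal (\<phi> (e (J \<omega>)) (x m \<omega>)) \<partial>M) \<le> ennreal (K * s)"
    using T.phi_mean K_pos s0 by (simp add: Rs ennreal_mult)
  have maxi: "\<forall>c>0. measure M {\<omega> \<in> space M. \<exists>m\<ge>n0. c \<le> \<phi> (e (J \<omega>)) (x m \<omega>)} \<le> K * s / c"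
  proof (intro allI impI)
    fix c :: real assume c: "c > 0"
    let ?A = "{\<omega> \<in> space M. \<exists>m\<ge>n0. c \<le> \<phi> (e (J \<omega>)) (x m \<omega>)}"
    have "ennreal (c / K) * ennreal (measure M ?A) \<le> ennreal s"
      using T.maxineq[OF c] by (simp add: Rs emeasure_eq_measure)
    then have "ennreal (c / K * measure M ?A) \<le> ennreal s"
      using c K_pos by (subst ennreal_mult) auto
    then have "c / K * measure M ?A \<le> s" using s0 by simp
    then show "measure M ?A \<le> K * s / c" using c K_pos by (simp add: field_simps)
  qed
  show ?thesis using sub_M[OF J] n0 s0 s2 mean maxi by blast
qed


lemma good: assumes \<epsilon>: "\<epsilon> > 0" and a: "a > 0"
  shows "\<exists>J n0 s. J \<in> measurable M (count_space UNIV)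
    \<and> real n0 \<le> \<Phi> (\<tau> (a / (3 * K))) (chi (a / (3 * K))) \<and> 0 \<le> s \<and> K * s < 2 * a / 3
    \<and> (\<forall>m\<ge>n0. (\<integral>\<^sup>+ \<omega>. ennreal (\<phi> (e (J \<omega>)) (x m \<omega>)) \<partial>M) \<le> ennreal (K * s))
    \<and> {\<omega> \<in> space M. \<exists>m\<ge>n0. \<theta> \<epsilon> \<le> \<phi> (e (J \<omega>)) (x m \<omega>)} \<in> sets M
    \<and> measure M {\<omega> \<in> space M. \<exists>m\<ge>n0. \<theta> \<epsilon> \<le> \<phi> (e (J \<omega>)) (x m \<omega>)} < 2 * a / (3 * \<theta> \<epsilon>)
    \<and> (\<forall>\<omega>\<in>space M. \<omega> \<notin> {\<omega> \<in> space M. \<exists>m\<ge>n0. \<theta> \<epsilon> \<le> \<phi> (e (J \<omega>)) (x m \<omega>)} \<longrightarrow>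
          (\<forall>m\<ge>n0. dist (e (J \<omega>)) (x m \<omega>) < \<epsilon>))"
proof -
  have \<delta>: "a / (3 * K) > 0" using a K_pos by simp
  obtain J n0 s where J: "J \<in> measurable M (count_space UNIV)"
    and n0: "real n0 \<le> \<Phi> (\<tau> (a / (3 * K))) (chi (a / (3 * K)))"
    and s: "0 \<le> s" "s < 2 * (a / (3 * K))"
    and mean: "\<forall>m\<ge>n0. (\<integral>\<^sup>+ \<omega>. ennreal (\<phi> (e (J \<omega>)) (x m \<omega>)) \<partial>M) \<le> ennreal (K * s)"
    and maxi: "\<forall>c>0. measure M {\<omega> \<in> space M. \<exists>m\<ge>n0. c \<le> \<phi> (e (J \<omega>)) (x m \<omega>)} \<le> K * s / c"
    using core[OF \<delta>] by blast
  have Ks: "K * s < 2 * a / 3" using s K_pos by (simp add: field_simps)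
  have th: "\<theta> \<epsilon> > 0" using theta_pos[OF \<epsilon>] .
  have [measurable]: "J \<in> measurable M (count_space UNIV)" by (rule J)
  have [measurable]: "\<And>m. (\<lambda>\<omega>. \<phi> (e (J \<omega>)) (x m \<omega>)) \<in> borel_measurable M"
    by (rule phiJ_meas[OF J sub_M[OF adapted]])
  have Em: "{\<omega> \<in> space M. \<exists>m\<ge>n0. \<theta> \<epsilon> \<le> \<phi> (e (J \<omega>)) (x m \<omega>)} \<in> sets M" by measurable
  have "measure M {\<omega> \<in> space M. \<exists>m\<ge>n0. \<theta> \<epsilon> \<le> \<phi> (e (J \<omega>)) (x m \<omega>)} \<le> K * s / \<theta> \<epsilon>"
    using maxi th by blast
  also have "\<dots> < 2 * a / (3 * \<theta> \<epsilon>)" using Ks th by (simp add: field_simps)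
  finally have Emeas: "measure M {\<omega> \<in> space M. \<exists>m\<ge>n0. \<theta> \<epsilon> \<le> \<phi> (e (J \<omega>)) (x m \<omega>)} < 2 * a / (3 * \<theta> \<epsilon>)" .
  have dist: "\<forall>\<omega>\<in>space M. \<omega> \<notin> {\<omega> \<in> space M. \<exists>m\<ge>n0. \<theta> \<epsilon> \<le> \<phi> (e (J \<omega>)) (x m \<omega>)} \<longrightarrow>
          (\<forall>m\<ge>n0. dist (e (J \<omega>)) (x m \<omega>) < \<epsilon>)"
  proof (intro ballI impI allI)
    fix \<omega> m assume \<omega>: "\<omega> \<in> space M"
      and nE: "\<omega> \<notin> {\<omega> \<in> space M. \<exists>m\<ge>n0. \<theta> \<epsilon> \<le> \<phi> (e (J \<omega>)) (x m \<omega>)}" and m: "n0 \<le> m"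
    then have "\<not> \<theta> \<epsilon> \<le> \<phi> (e (J \<omega>)) (x m \<omega>)" by blast
    then have "\<phi> (e (J \<omega>)) (x m \<omega>) < \<theta> \<epsilon>" by simp
    then show "dist (e (J \<omega>)) (x m \<omega>) < \<epsilon>" by (rule consistent[OF \<epsilon>])
  qed
  show ?thesis using J n0 s(1) Ks mean Em Emeas dist by blast
qed

lemma AE_small:
  assumes "\<And>l. l > 0 \<Longrightarrow> \<exists>E\<in>sets M. measure M E \<le> l \<and> {\<omega> \<in> space M. \<not> Pr \<omega>} \<subseteq> E"
  shows "AE \<omega> in M. Pr \<omega>"
proof -
  have "\<forall>k::nat. \<exists>E. E \<in> sets M \<and> measure M E \<le> 1 / Suc k \<and> {\<omega> \<in> space M. \<not> Pr \<omega>} \<subseteq> E"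
  proof
    fix k :: nat
    have "(1::real) / Suc k > 0" by simp
    then show "\<exists>E. E \<in> sets M \<and> measure M E \<le> 1 / Suc k \<and> {\<omega> \<in> space M. \<not> Pr \<omega>} \<subseteq> E"
      using assms by blast
  qed
  then obtain E where E: "\<And>k. E k \<in> sets M" "\<And>k. measure M (E k) \<le> 1 / Suc k"
    "\<And>k. {\<omega> \<in> space M. \<not> Pr \<omega>} \<subseteq> E k" by metis
  define N where "N = (\<Inter>k. E k)"
  have N: "N \<in> sets M" unfolding N_def using E(1) by auto
  have le: "measure M N \<le> 1 / Suc k" for k
  proof -
    have "measure M N \<le> measure M (E k)"
      using E(1) N unfolding N_def by (intro finite_measure_mono) auto
    then show ?thesis using E(2)[of k] by linarith
  qed
  have "measure M N = 0"
  proof (rule ccontr)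
    assume "measure M N \<noteq> 0"
    then have "measure M N > 0" using measure_nonneg[of M N] by linarith
    then obtain k where "inverse (real (Suc k)) < measure M N" using reals_Archimedean by blast
    with le[of k] show False by (simp add: inverse_eq_divide)
  qed
  then have "N \<in> null_sets M" using N by (simp add: null_sets_def emeasure_eq_measure)
  moreover have "{\<omega> \<in> space M. \<not> Pr \<omega>} \<subseteq> N" unfolding N_def using E(3) by blast
  ultimately show ?thesis by (rule AE_I')
qed

lemma jensen_theta:
  fixes f g :: "'b \<Rightarrow> real"
  assumes fm: "f \<in> borel_measurable M" and f0: "\<And>\<omega>. \<omega> \<in> space M \<Longrightarrow> 0 \<le> f \<omega>"
    and gm: "g \<in> borel_measurable M" and fg: "\<And>\<omega>. \<omega> \<in> space M \<Longrightarrow> \<theta> (f \<omega>) \<le> g \<omega>"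
    and gi: "(\<integral>\<^sup>+ \<omega>. ennreal (g \<omega>) \<partial>M) \<le> ennreal q" and q: "0 \<le> q"
  shows "\<exists>r. (\<integral>\<^sup>+ \<omega>. ennreal (f \<omega>) \<partial>M) = ennreal r \<and> 0 \<le> r \<and> \<theta> r \<le> q"
proof -
  define \<theta>e where "\<theta>e t = \<theta> (max t 0)" for t
  have mono: "\<theta> u \<le> \<theta> v" if "0 \<le> u" "u \<le> v" for u v
    using theta_mono that unfolding mono_on_def by auto
  have g0: "0 \<le> g \<omega>" if "\<omega> \<in> space M" for \<omega>
    using theta_nonneg[OF f0[OF that]] fg[OF that] by linarith
  have gint: "integrable M g"
  proof (rule integrableI_nonneg)
    show "(\<integral>\<^sup>+ \<omega>. ennreal (g \<omega>) \<partial>M) < \<infinity>" using gi by (simp add: le_less_trans)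
  qed (use gm g0 in auto)
  have t1: "\<theta> 1 > 0" by (rule theta_pos) simp
  have bnd: "f \<omega> \<le> 1 + g \<omega> / \<theta> 1" if \<omega>: "\<omega> \<in> space M" for \<omega>
  proof (cases "f \<omega> \<le> 1")
    case True then show ?thesis using g0[OF \<omega>] t1 by (simp add: add_increasing2)
  next
    case False
    then have fp: "f \<omega> > 1" by simp
    have "\<theta> ((1 - 1 / f \<omega>) *\<^sub>R 0 + (1 / f \<omega>) *\<^sub>R f \<omega>) \<le> (1 - 1 / f \<omega>) * \<theta> 0 + (1 / f \<omega>) * \<theta> (f \<omega>)"
      by (rule convex_onD[OF theta_convex]) (use fp in auto)
    then have "\<theta> 1 \<le> \<theta> (f \<omega>) / f \<omega>" using fp by (simp add: theta_0)
    then have "f \<omega> * \<theta> 1 \<le> \<theta> (f \<omega>)" using fp by (simp add: field_simps)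
    then have "f \<omega> * \<theta> 1 \<le> g \<omega>" using fg[OF \<omega>] by linarith
    then have "f \<omega> \<le> g \<omega> / \<theta> 1" using t1 by (simp add: field_simps)
    then show ?thesis by linarith
  qed
  have fint: "integrable M f"
  proof (rule Bochner_Integration.integrable_bound)
    show "integrable M (\<lambda>\<omega>. 1 + g \<omega> / \<theta> 1)" using gint by auto
    show "f \<in> borel_measurable M" by (rule fm)
    show "AE \<omega> in M. norm (f \<omega>) \<le> norm (1 + g \<omega> / \<theta> 1)"
      using AE_space
    proof eventually_elim
      case (elim \<omega>)
      have "0 \<le> g \<omega> / \<theta> 1" using g0[OF elim] t1 by simp
      then show ?case using bnd[OF elim] f0[OF elim] by simp
    qed
  qed
  have conv: "convex_on UNIV \<theta>e"
  proof (rule convex_onI)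
    fix t u v :: real assume t: "t > 0" "t < 1"
    have "\<theta>e ((1 - t) *\<^sub>R u + t *\<^sub>R v) \<le> \<theta> ((1 - t) *\<^sub>R max u 0 + t *\<^sub>R max v 0)"
      unfolding \<theta>e_def
    proof (rule mono)
      show "0 \<le> max ((1 - t) *\<^sub>R u + t *\<^sub>R v) 0" by simp
      have "(1 - t) * u \<le> (1 - t) * max u 0" "t * v \<le> t * max v 0" using t
        by (auto intro!: mult_left_mono)
      then have s1: "(1 - t) * u + t * v \<le> (1 - t) * max u 0 + t * max v 0" by (rule add_mono)
      have s2: "0 \<le> (1 - t) * max u 0 + t * max v 0" using t by (intro add_nonneg_nonneg mult_nonneg_nonneg) auto
      show "max ((1 - t) *\<^sub>R u + t *\<^sub>R v) 0 \<le> (1 - t) *\<^sub>R max u 0 + t *\<^sub>R max v 0"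
        using s1 s2 by simp
    qed
    also have "\<dots> \<le> (1 - t) * \<theta> (max u 0) + t * \<theta> (max v 0)"
      by (rule convex_onD[OF theta_convex]) (use t in auto)
    finally show "\<theta>e ((1 - t) *\<^sub>R u + t *\<^sub>R v) \<le> (1 - t) * \<theta>e u + t * \<theta>e v"
      unfolding \<theta>e_def .
  qed simp
  have cont: "continuous_on UNIV \<theta>e" by (rule convex_on_continuous[OF open_UNIV conv])
  have [measurable]: "\<theta>e \<in> borel_measurable borel" by (rule borel_measurable_continuous_onI[OF cont])
  have [measurable]: "f \<in> borel_measurable M" by (rule fm)
  have tint: "integrable M (\<lambda>\<omega>. \<theta>e (f \<omega>))"
  proof (rule Bochner_Integration.integrable_bound[OF gint])
    show "(\<lambda>\<omega>. \<theta>e (f \<omega>)) \<in> borel_measurable M" by measurable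
    show "AE \<omega> in M. norm (\<theta>e (f \<omega>)) \<le> norm (g \<omega>)"
      using AE_space by eventually_elim (use fg f0 g0 theta_nonneg in \<open>auto simp: \<theta>e_def\<close>)
  qed
  have "\<theta>e (expectation f) \<le> expectation (\<lambda>\<omega>. \<theta>e (f \<omega>))"
    by (rule jensens_inequality[where I=UNIV]) (use fint tint conv in auto)
  also have "\<dots> \<le> expectation g"
    by (rule integral_mono[OF tint gint]) (use fg f0 in \<open>auto simp: \<theta>e_def\<close>)
  also have "\<dots> \<le> q"
  proof -
    have "ennreal (expectation g) = (\<integral>\<^sup>+ \<omega>. ennreal (g \<omega>) \<partial>M)"
      by (rule nn_integral_eq_integral[symmetric]) (use gint g0 in auto)
    then have "ennreal (expectation g) \<le> ennreal q" using gi by simp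
    then show ?thesis using q by simp
  qed
  finally have th: "\<theta>e (expectation f) \<le> q" .
  have r0: "0 \<le> expectation f" by (rule Bochner_Integration.integral_nonneg) (rule f0)
  have "(\<integral>\<^sup>+ \<omega>. ennreal (f \<omega>) \<partial>M) = ennreal (expectation f)"
    by (rule nn_integral_eq_integral) (use fint f0 in auto)
  then show ?thesis using th r0 unfolding \<theta>e_def by (intro exI[of _ "expectation f"]) simp
qed


lemma theta_le_phi: "\<theta> (dist a b) \<le> \<phi> a b"
proof (cases "dist a b = 0")
  case True then show ?thesis using theta_0 phi_nonneg by simp
next
  case False
  then have "dist a b > 0" by simp
  then show ?thesis using consistent[of "dist a b" a b] by force
qed

lemma final:
  assumes rho_def: "\<And>e. \<rho> e = \<Phi> (\<tau> (e / (3 * K))) (chi (e / (3 * K)))"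
  shows "\<exists>xl \<in> measurable M borel. (\<forall>\<omega>\<in>space M. F (xl \<omega>) = 0) \<and>
     ((\<lambda>n. \<integral>\<^sup>+ \<omega>. ennreal (dist (x n \<omega>) (xl \<omega>)) \<partial>M) \<longlonglongrightarrow> 0) \<and>
     (AE \<omega> in M. (\<lambda>n. dist (x n \<omega>) (xl \<omega>)) \<longlonglongrightarrow> 0) \<and>
     (\<forall>e>0. \<forall>n. real n \<ge> \<rho> (\<theta> (e / 2)) \<longrightarrow>
        (\<integral>\<^sup>+ \<omega>. ennreal (dist (x n \<omega>) (xl \<omega>)) \<partial>M) < ennreal e) \<and>
     (\<forall>l>0. \<forall>e>0. measure M {\<omega> \<in> space M. \<exists>n. real n \<ge> \<rho> (l * \<theta> (e / 2)) \<and>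
        dist (x n \<omega>) (xl \<omega>) \<ge> e} < l)"
proof -
  have xM[measurable]: "\<And>n. x n \<in> borel_measurable M" by (rule sub_M[OF adapted])
  note F_meas[measurable]
  define Pj where "Pj j \<omega> = (\<exists>N. \<forall>m\<ge>N. \<forall>m'\<ge>N. dist (x m \<omega>) (x m' \<omega>) < inverse (real (Suc j))
      \<and> (\<exists>s\<in>S. dist s (x m \<omega>) < inverse (real (Suc j))))" for j \<omega>
  have AEj: "AE \<omega> in M. Pj j \<omega>" for j
  proof (rule AE_small)
    fix l :: real assume l: "l > 0"
    define \<epsilon> where "\<epsilon> = inverse (real (Suc j))"
    have \<epsilon>: "\<epsilon> > 0" "\<epsilon> / 2 > 0" by (auto simp: \<epsilon>_def)
    have th: "\<theta> (\<epsilon> / 2) > 0" using theta_pos[OF \<epsilon>(2)] .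
    have lt: "l * \<theta> (\<epsilon> / 2) > 0" using l th by simp
    from good[OF \<epsilon>(2) lt] obtain J n0 s where J: "J \<in> measurable M (count_space UNIV)"
      and "real n0 \<le> \<Phi> (\<tau> (l * \<theta> (\<epsilon> / 2) / (3 * K))) (chi (l * \<theta> (\<epsilon> / 2) / (3 * K)))"
      and "0 \<le> s" and "K * s < 2 * (l * \<theta> (\<epsilon> / 2)) / 3"
      and "\<forall>m\<ge>n0. (\<integral>\<^sup>+ \<omega>. ennreal (\<phi> (e (J \<omega>)) (x m \<omega>)) \<partial>M) \<le> ennreal (K * s)"
      and E: "{\<omega> \<in> space M. \<exists>m\<ge>n0. \<theta> (\<epsilon> / 2) \<le> \<phi> (e (J \<omega>)) (x m \<omega>)} \<in> sets M"
        "measure M {\<omega> \<in> space M. \<exists>m\<ge>n0. \<theta> (\<epsilon> / 2) \<le> \<phi> (e (J \<omega>)) (x m \<omega>)} < 2 * (l * \<theta> (\<epsilon> / 2)) / (3 * \<theta> (\<epsilon> / 2))"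
      and D: "\<forall>\<omega>\<in>space M. \<omega> \<notin> {\<omega> \<in> space M. \<exists>m\<ge>n0. \<theta> (\<epsilon> / 2) \<le> \<phi> (e (J \<omega>)) (x m \<omega>)} \<longrightarrow>
          (\<forall>m\<ge>n0. dist (e (J \<omega>)) (x m \<omega>) < \<epsilon> / 2)"
      by blast
    have "2 * (l * \<theta> (\<epsilon> / 2)) / (3 * \<theta> (\<epsilon> / 2)) = 2 * l / 3" using th by (simp add: field_simps)
    then have Em: "measure M {\<omega> \<in> space M. \<exists>m\<ge>n0. \<theta> (\<epsilon> / 2) \<le> \<phi> (e (J \<omega>)) (x m \<omega>)} \<le> l"
      using E(2) l by linarith
    have "{\<omega> \<in> space M. \<not> Pj j \<omega>} \<subseteq> {\<omega> \<in> space M. \<exists>m\<ge>n0. \<theta> (\<epsilon> / 2) \<le> \<phi> (e (J \<omega>)) (x m \<omega>)}"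
    proof (rule subsetI, rule ccontr)
      fix \<omega> assume a: "\<omega> \<in> {\<omega> \<in> space M. \<not> Pj j \<omega>}"
        and b: "\<omega> \<notin> {\<omega> \<in> space M. \<exists>m\<ge>n0. \<theta> (\<epsilon> / 2) \<le> \<phi> (e (J \<omega>)) (x m \<omega>)}"
      have \<omega>: "\<omega> \<in> space M" using a by auto
      have dd: "\<forall>m\<ge>n0. dist (e (J \<omega>)) (x m \<omega>) < \<epsilon> / 2" using D \<omega> b by blast
      have "Pj j \<omega>" unfolding Pj_def \<epsilon>_def[symmetric]
      proof (intro exI[of _ n0] allI impI conjI)
        fix m m' assume m: "n0 \<le> m" and m': "n0 \<le> m'"
        have "dist (x m \<omega>) (x m' \<omega>) \<le> dist (e (J \<omega>)) (x m \<omega>) + dist (e (J \<omega>)) (x m' \<omega>)"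
          by (rule dist_triangle3)
        also have "\<dots> < \<epsilon>"
        proof -
          have "dist (e (J \<omega>)) (x m \<omega>) < \<epsilon> / 2" "dist (e (J \<omega>)) (x m' \<omega>) < \<epsilon> / 2"
            using dd m m' by auto
          then show ?thesis by linarith
        qed
        finally show "dist (x m \<omega>) (x m' \<omega>) < \<epsilon>" .
        show "\<exists>s\<in>S. dist s (x m \<omega>) < \<epsilon>"
        proof (intro bexI[of _ "e (J \<omega>)"])
          have "dist (e (J \<omega>)) (x m \<omega>) < \<epsilon> / 2" using dd m by auto
          then show "dist (e (J \<omega>)) (x m \<omega>) < \<epsilon>" using \<epsilon> by linarith
        qed (rule e_in_S)
      qed
      then show False using a by auto
    qed
    then show "\<exists>E\<in>sets M. measure M E \<le> l \<and> {\<omega> \<in> space M. \<not> Pj j \<omega>} \<subseteq> E"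
      using E(1) Em by blast
  qed
  then have AEall: "AE \<omega> in M. \<forall>j. Pj j \<omega>" by (simp add: AE_all_countable)
  have cauchy: "Cauchy (\<lambda>n. x n \<omega>)" if "\<forall>j. Pj j \<omega>" for \<omega>
    unfolding metric_Cauchy_iff2 using that unfolding Pj_def by blast
  have inS: "lim (\<lambda>n. x n \<omega>) \<in> S" if P: "\<forall>j. Pj j \<omega>" for \<omega>
  proof -
    let ?L = "lim (\<lambda>n. x n \<omega>)"
    have lim: "(\<lambda>n. x n \<omega>) \<longlonglongrightarrow> ?L"
      using cauchy[OF P] by (simp add: Cauchy_convergent_iff convergent_LIMSEQ_iff)
    have "?L \<in> closure S" unfolding closure_approachable
    proof (intro allI impI)
      fix r :: real assume r: "r > 0"
      then obtain j where j: "inverse (real (Suc j)) < r / 2" using reals_Archimedean[of "r/2"] by auto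
      obtain N where N: "\<forall>m\<ge>N. \<forall>m'\<ge>N. dist (x m \<omega>) (x m' \<omega>) < inverse (real (Suc j))
        \<and> (\<exists>s\<in>S. dist s (x m \<omega>) < inverse (real (Suc j)))" using P unfolding Pj_def by blast
      obtain N2 where N2: "\<forall>m\<ge>N2. dist (x m \<omega>) ?L < r / 2"
        using lim r unfolding LIMSEQ_def by (metis half_gt_zero)
      define m where "m = max N N2"
      obtain s where s: "s \<in> S" "dist s (x m \<omega>) < inverse (real (Suc j))" using N[rule_format, of m m] unfolding m_def by auto
      have "dist s ?L \<le> dist s (x m \<omega>) + dist (x m \<omega>) ?L" by (rule dist_triangle)
      also have "\<dots> < r"
      proof -
        have "dist (x m \<omega>) ?L < r / 2" using N2 unfolding m_def by auto
        then show ?thesis using s(2) j by linarith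
      qed
      finally show "\<exists>y\<in>S. dist y ?L < r" using s(1) by blast
    qed
    then show ?thesis using zer_closed by (simp add: closure_closed)
  qed
  define y where "y n \<omega> = (if Cauchy (\<lambda>n. x n \<omega>) then x n \<omega> else e 0)" for n \<omega>
  have [measurable]: "Measurable.pred M (\<lambda>\<omega>. Cauchy (\<lambda>n. x n \<omega>))"
    unfolding metric_Cauchy_iff2 by measurable
  have ym[measurable]: "y n \<in> borel_measurable M" for n unfolding y_def by measurable
  define L where "L \<omega> = lim (\<lambda>n. y n \<omega>)" for \<omega>
  have ylim: "(\<lambda>n. y n \<omega>) \<longlonglongrightarrow> L \<omega>" for \<omega>
  proof (cases "Cauchy (\<lambda>n. x n \<omega>)")
    case True
    then have "convergent (\<lambda>n. y n \<omega>)" unfolding y_def by (simp add: Cauchy_convergent_iff)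
    then show ?thesis unfolding L_def by (simp add: convergent_LIMSEQ_iff)
  next
    case False
    then show ?thesis unfolding L_def y_def by (simp add: convergent_LIMSEQ_iff convergent_const)
  qed
  have Lm[measurable]: "L \<in> borel_measurable M"
    by (rule borel_measurable_LIMSEQ_metric[OF ym ylim])
  define xl where "xl \<omega> = (if F (L \<omega>) = 0 then L \<omega> else e 0)" for \<omega>
  have xlm[measurable]: "xl \<in> borel_measurable M" unfolding xl_def by measurable
  have xlS: "F (xl \<omega>) = 0" for \<omega> using e_in_S[of 0] by (simp add: xl_def)
  have xconv: "AE \<omega> in M. (\<lambda>n. x n \<omega>) \<longlonglongrightarrow> xl \<omega>"
    using AEall
  proof eventually_elim
    case (elim \<omega>)
    have C: "Cauchy (\<lambda>n. x n \<omega>)" by (rule cauchy[OF elim])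
    then have Ly: "L \<omega> = lim (\<lambda>n. x n \<omega>)" unfolding L_def y_def by simp
    then have "F (L \<omega>) = 0" using inS[OF elim] by simp
    then have "xl \<omega> = lim (\<lambda>n. x n \<omega>)" unfolding xl_def Ly by simp
    then show ?case using C by (simp add: Cauchy_convergent_iff convergent_LIMSEQ_iff)
  qed
  have dconv: "AE \<omega> in M. (\<lambda>n. dist (x n \<omega>) (xl \<omega>)) \<longlonglongrightarrow> 0"
    using xconv by eventually_elim (simp add: tendsto_dist_iff[symmetric])

  have asr: "\<forall>l>0. \<forall>\<epsilon>>0. measure M {\<omega> \<in> space M. \<exists>n. real n \<ge> \<rho> (l * \<theta> (\<epsilon> / 2)) \<and>
        dist (x n \<omega>) (xl \<omega>) \<ge> \<epsilon>} < l"
  proof (intro allI impI)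
    fix l \<epsilon> :: real assume l: "l > 0" and \<epsilon>: "\<epsilon> > 0"
    have \<epsilon>2: "\<epsilon> / 2 > 0" using \<epsilon> by simp
    have th: "\<theta> (\<epsilon> / 2) > 0" by (rule theta_pos[OF \<epsilon>2])
    have lt: "l * \<theta> (\<epsilon> / 2) > 0" using l th by simp
    from good[OF \<epsilon>2 lt] obtain J n0 s where J: "J \<in> measurable M (count_space UNIV)"
      and n0: "real n0 \<le> \<Phi> (\<tau> (l * \<theta> (\<epsilon> / 2) / (3 * K))) (chi (l * \<theta> (\<epsilon> / 2) / (3 * K)))"
      and "0 \<le> s" and "K * s < 2 * (l * \<theta> (\<epsilon> / 2)) / 3"
      and "\<forall>m\<ge>n0. (\<integral>\<^sup>+ \<omega>. ennreal (\<phi> (e (J \<omega>)) (x m \<omega>)) \<partial>M) \<le> ennreal (K * s)"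
      and E1: "{\<omega> \<in> space M. \<exists>m\<ge>n0. \<theta> (\<epsilon> / 2) \<le> \<phi> (e (J \<omega>)) (x m \<omega>)} \<in> sets M"
      and E2: "measure M {\<omega> \<in> space M. \<exists>m\<ge>n0. \<theta> (\<epsilon> / 2) \<le> \<phi> (e (J \<omega>)) (x m \<omega>)} < 2 * (l * \<theta> (\<epsilon> / 2)) / (3 * \<theta> (\<epsilon> / 2))"
      and D: "\<forall>\<omega>\<in>space M. \<omega> \<notin> {\<omega> \<in> space M. \<exists>m\<ge>n0. \<theta> (\<epsilon> / 2) \<le> \<phi> (e (J \<omega>)) (x m \<omega>)} \<longrightarrow>
          (\<forall>m\<ge>n0. dist (e (J \<omega>)) (x m \<omega>) < \<epsilon> / 2)"
      by blast
    let ?E = "{\<omega> \<in> space M. \<exists>m\<ge>n0. \<theta> (\<epsilon> / 2) \<le> \<phi> (e (J \<omega>)) (x m \<omega>)}"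
    let ?A = "{\<omega> \<in> space M. \<exists>n. real n \<ge> \<rho> (l * \<theta> (\<epsilon> / 2)) \<and> dist (x n \<omega>) (xl \<omega>) \<ge> \<epsilon>}"
    have "AE \<omega> in M. \<omega> \<in> ?A \<longrightarrow> \<omega> \<in> ?E"
      using xconv
    proof eventually_elim
      case (elim \<omega>)
      show ?case
      proof (rule impI, rule ccontr)
        assume A: "\<omega> \<in> ?A" and nE: "\<omega> \<notin> ?E"
        from A obtain n where \<omega>: "\<omega> \<in> space M"
          and n: "\<rho> (l * \<theta> (\<epsilon> / 2)) \<le> real n" "\<epsilon> \<le> dist (x n \<omega>) (xl \<omega>)" by auto
        have dd: "\<forall>m\<ge>n0. dist (e (J \<omega>)) (x m \<omega>) < \<epsilon> / 2" using D \<omega> nE by blast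
        have "real n0 \<le> real n" using n0 n(1) rho_def[of "l * \<theta> (\<epsilon> / 2)"] by simp
        then have nn0: "n0 \<le> n" by simp
        have lim: "(\<lambda>m. dist (e (J \<omega>)) (x m \<omega>)) \<longlonglongrightarrow> dist (e (J \<omega>)) (xl \<omega>)"
          by (intro tendsto_intros elim)
        have "dist (e (J \<omega>)) (xl \<omega>) \<le> \<epsilon> / 2"
          by (rule LIMSEQ_le_const2[OF lim]) (use dd in \<open>auto intro!: exI[of _ n0] less_imp_le\<close>)
        moreover have "dist (x n \<omega>) (xl \<omega>) \<le> dist (e (J \<omega>)) (x n \<omega>) + dist (e (J \<omega>)) (xl \<omega>)"
          by (rule dist_triangle3)
        moreover have "dist (e (J \<omega>)) (x n \<omega>) < \<epsilon> / 2" using dd nn0 by auto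
        ultimately show False using n(2) by linarith
      qed
    qed
    then have "emeasure M ?A \<le> emeasure M ?E" using E1 by (rule emeasure_mono_AE)
    then have "measure M ?A \<le> measure M ?E" by (simp add: emeasure_eq_measure)
    also have "\<dots> < 2 * (l * \<theta> (\<epsilon> / 2)) / (3 * \<theta> (\<epsilon> / 2))" by (rule E2)
    also have "\<dots> = 2 * l / 3" using th by (simp add: field_simps)
    also have "\<dots> < l" using l by simp
    finally show "measure M ?A < l" .
  qed
  have mr: "\<forall>\<epsilon>>0. \<forall>n. real n \<ge> \<rho> (\<theta> (\<epsilon> / 2)) \<longrightarrow>
        (\<integral>\<^sup>+ \<omega>. ennreal (dist (x n \<omega>) (xl \<omega>)) \<partial>M) < ennreal \<epsilon>"
  proof (intro allI impI)
    fix \<epsilon> :: real and n assume \<epsilon>: "\<epsilon> > 0" and n: "\<rho> (\<theta> (\<epsilon> / 2)) \<le> real n"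
    have \<epsilon>2: "\<epsilon> / 2 > 0" using \<epsilon> by simp
    have th: "\<theta> (\<epsilon> / 2) > 0" by (rule theta_pos[OF \<epsilon>2])
    from good[OF \<epsilon>2 th] obtain J n0 s where J: "J \<in> measurable M (count_space UNIV)"
      and n0: "real n0 \<le> \<Phi> (\<tau> (\<theta> (\<epsilon> / 2) / (3 * K))) (chi (\<theta> (\<epsilon> / 2) / (3 * K)))"
      and s0: "0 \<le> s" and Ks: "K * s < 2 * \<theta> (\<epsilon> / 2) / 3"
      and mean: "\<forall>m\<ge>n0. (\<integral>\<^sup>+ \<omega>. ennreal (\<phi> (e (J \<omega>)) (x m \<omega>)) \<partial>M) \<le> ennreal (K * s)"
      by blast
    have "real n0 \<le> real n" using n0 n rho_def[of "\<theta> (\<epsilon> / 2)"] by simp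
    then have nn0: "n0 \<le> n" by simp
    define q where "q = K * s"
    have q: "0 \<le> q" "q < \<theta> (\<epsilon> / 2)" using K_pos s0 Ks th by (auto simp: q_def)
    have conv0: "convex_on {0<..} \<theta>"
      by (rule convex_on_subset[OF theta_convex]) auto
    have contt: "continuous_on {0<..} \<theta>"
      by (rule convex_on_continuous[OF _ conv0]) simp
    obtain d where d: "d > 0" "\<And>y. y \<in> {0<..} \<Longrightarrow> dist y (\<epsilon> / 2) < d \<Longrightarrow> dist (\<theta> y) (\<theta> (\<epsilon> / 2)) < \<theta> (\<epsilon> / 2) - q"
      using contt[unfolded continuous_on_iff, rule_format, of "\<epsilon> / 2" "\<theta> (\<epsilon> / 2) - q"] \<epsilon>2 q by auto
    define a' where "a' = max (\<epsilon> / 4) (\<epsilon> / 2 - d / 2)"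
    have a'0: "0 < a'" "a' < \<epsilon> / 2"
    proof -
      show "0 < a'" using \<epsilon> unfolding a'_def by (simp add: less_max_iff_disj)
      have "\<epsilon> / 4 < \<epsilon> / 2" "\<epsilon> / 2 - d / 2 < \<epsilon> / 2" using \<epsilon> d(1) by auto
      then show "a' < \<epsilon> / 2" unfolding a'_def by (rule max_less_iff_conj[THEN iffD2, OF conjI])
    qed
    have "dist a' (\<epsilon> / 2) < d" using a'0 d(1) by (auto simp: a'_def dist_real_def)
    then have "dist (\<theta> a') (\<theta> (\<epsilon> / 2)) < \<theta> (\<epsilon> / 2) - q" using d(2) a'0 by auto
    then have a'q: "q < \<theta> a'" by (auto simp: dist_real_def)
    have [measurable]: "J \<in> measurable M (count_space UNIV)" by (rule J)
    have zm[measurable]: "(\<lambda>\<omega>. e (J \<omega>)) \<in> borel_measurable M" by (rule eJ_meas[OF J])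
    have dz: "(\<integral>\<^sup>+ \<omega>. ennreal (dist (e (J \<omega>)) (x m \<omega>)) \<partial>M) \<le> ennreal a'" if m: "n0 \<le> m" for m
    proof -
      have pm: "(\<lambda>\<omega>. \<phi> (e (J \<omega>)) (x m \<omega>)) \<in> borel_measurable M" by (rule phiJ_meas[OF J xM])
      have "\<exists>r. (\<integral>\<^sup>+ \<omega>. ennreal (dist (e (J \<omega>)) (x m \<omega>)) \<partial>M) = ennreal r \<and> 0 \<le> r \<and> \<theta> r \<le> q"
      proof (rule jensen_theta)
        show "(\<lambda>\<omega>. dist (e (J \<omega>)) (x m \<omega>)) \<in> borel_measurable M" by measurable
        show "(\<lambda>\<omega>. \<phi> (e (J \<omega>)) (x m \<omega>)) \<in> borel_measurable M" by (rule pm)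
        show "(\<integral>\<^sup>+ \<omega>. ennreal (\<phi> (e (J \<omega>)) (x m \<omega>)) \<partial>M) \<le> ennreal q" using mean m by (simp add: q_def)
      qed (use theta_le_phi q in auto)
      then obtain r where r: "(\<integral>\<^sup>+ \<omega>. ennreal (dist (e (J \<omega>)) (x m \<omega>)) \<partial>M) = ennreal r" "0 \<le> r" "\<theta> r \<le> q"
        by blast
      have "r < a'"
      proof (rule ccontr)
        assume "\<not> r < a'"
        then have "\<theta> a' \<le> \<theta> r" using theta_mono a'0 unfolding mono_on_def by auto
        with r(3) a'q show False by linarith
      qed
      then have "ennreal r \<le> ennreal a'" by (intro ennreal_leI) simp
      then show ?thesis using r(1) by simp
    qed
    have "(\<integral>\<^sup>+ \<omega>. ennreal (dist (e (J \<omega>)) (xl \<omega>)) \<partial>M)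
        = (\<integral>\<^sup>+ \<omega>. liminf (\<lambda>m. ennreal (dist (e (J \<omega>)) (x m \<omega>))) \<partial>M)"
    proof (rule nn_integral_cong_AE)
      show "AE \<omega> in M. ennreal (dist (e (J \<omega>)) (xl \<omega>)) = liminf (\<lambda>m. ennreal (dist (e (J \<omega>)) (x m \<omega>)))"
        using xconv
      proof eventually_elim
        case (elim \<omega>)
        have T: "(\<lambda>m. ennreal (dist (e (J \<omega>)) (x m \<omega>))) \<longlonglongrightarrow> ennreal (dist (e (J \<omega>)) (xl \<omega>))"
          by (intro tendsto_intros elim)
        show ?case by (rule lim_imp_Liminf[symmetric, OF _ T]) simp
      qed
    qed
    also have "\<dots> \<le> liminf (\<lambda>m. \<integral>\<^sup>+ \<omega>. ennreal (dist (e (J \<omega>)) (x m \<omega>)) \<partial>M)"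
      by (rule nn_integral_liminf) measurable
    also have "\<dots> \<le> ennreal a'"
    proof -
      have "liminf (\<lambda>m. \<integral>\<^sup>+ \<omega>. ennreal (dist (e (J \<omega>)) (x m \<omega>)) \<partial>M)
          \<le> limsup (\<lambda>m. \<integral>\<^sup>+ \<omega>. ennreal (dist (e (J \<omega>)) (x m \<omega>)) \<partial>M)"
        by (rule Liminf_le_Limsup) simp
      also have "\<dots> \<le> ennreal a'"
        by (rule Limsup_bounded) (use dz in \<open>auto simp: eventually_sequentially\<close>)
      finally show ?thesis .
    qed
    finally have dzl: "(\<integral>\<^sup>+ \<omega>. ennreal (dist (e (J \<omega>)) (xl \<omega>)) \<partial>M) \<le> ennreal a'" .
    have "(\<integral>\<^sup>+ \<omega>. ennreal (dist (x n \<omega>) (xl \<omega>)) \<partial>M)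
        \<le> (\<integral>\<^sup>+ \<omega>. ennreal (dist (e (J \<omega>)) (x n \<omega>)) + ennreal (dist (e (J \<omega>)) (xl \<omega>)) \<partial>M)"
    proof (rule nn_integral_mono)
      fix \<omega>
      have "ennreal (dist (x n \<omega>) (xl \<omega>)) \<le> ennreal (dist (e (J \<omega>)) (x n \<omega>) + dist (e (J \<omega>)) (xl \<omega>))"
        by (rule ennreal_leI) (rule dist_triangle3)
      also have "\<dots> = ennreal (dist (e (J \<omega>)) (x n \<omega>)) + ennreal (dist (e (J \<omega>)) (xl \<omega>))"
        by (rule ennreal_plus) auto
      finally show "ennreal (dist (x n \<omega>) (xl \<omega>)) \<le> ennreal (dist (e (J \<omega>)) (x n \<omega>)) + ennreal (dist (e (J \<omega>)) (xl \<omega>))" .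
    qed
    also have "\<dots> = (\<integral>\<^sup>+ \<omega>. ennreal (dist (e (J \<omega>)) (x n \<omega>)) \<partial>M) + (\<integral>\<^sup>+ \<omega>. ennreal (dist (e (J \<omega>)) (xl \<omega>)) \<partial>M)"
      by (rule nn_integral_add) measurable
    also have "\<dots> \<le> ennreal a' + ennreal a'" by (intro add_mono dz nn0 dzl)
    also have "\<dots> = ennreal (a' + a')" using a'0 by (intro ennreal_plus[symmetric]) auto
    also have "\<dots> < ennreal \<epsilon>" using a'0 by (intro ennreal_lessI) auto
    finally show "(\<integral>\<^sup>+ \<omega>. ennreal (dist (x n \<omega>) (xl \<omega>)) \<partial>M) < ennreal \<epsilon>" .
  qed
  have mc: "(\<lambda>n. \<integral>\<^sup>+ \<omega>. ennreal (dist (x n \<omega>) (xl \<omega>)) \<partial>M) \<longlonglongrightarrow> 0"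
  proof (rule order_tendstoI)
    fix a :: ennreal assume "a < 0" then show "\<forall>\<^sub>F n in sequentially. a < (\<integral>\<^sup>+ \<omega>. ennreal (dist (x n \<omega>) (xl \<omega>)) \<partial>M)"
      by simp
  next
    fix a :: ennreal assume a: "0 < a"
    obtain b where b: "0 < b" "b < a" using dense[OF a] by blast
    then have "b \<noteq> top" using top_greatest[of a] by (metis not_le)
    then obtain \<epsilon> where \<epsilon>: "b = ennreal \<epsilon>" "0 \<le> \<epsilon>" by (cases b) auto
    have \<epsilon>0: "\<epsilon> > 0" using b(1) \<epsilon> by simp
    show "\<forall>\<^sub>F n in sequentially. (\<integral>\<^sup>+ \<omega>. ennreal (dist (x n \<omega>) (xl \<omega>)) \<partial>M) < a"
      unfolding eventually_sequentially
    proof (intro exI[of _ "nat \<lceil>\<rho> (\<theta> (\<epsilon> / 2))\<rceil>"] allI impI)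
      fix n assume "nat \<lceil>\<rho> (\<theta> (\<epsilon> / 2))\<rceil> \<le> n"
      then have "\<rho> (\<theta> (\<epsilon> / 2)) \<le> real n"
        using real_nat_ceiling_ge[of "\<rho> (\<theta> (\<epsilon> / 2))"] by (meson of_nat_le_iff order_trans)
      then have "(\<integral>\<^sup>+ \<omega>. ennreal (dist (x n \<omega>) (xl \<omega>)) \<partial>M) < ennreal \<epsilon>" using mr \<epsilon>0 by blast
      then show "(\<integral>\<^sup>+ \<omega>. ennreal (dist (x n \<omega>) (xl \<omega>)) \<partial>M) < a" using b \<epsilon> by simp
    qed
  qed
  show ?thesis using xlm xlS mc dconv mr asr by blast
qed

end


theorem theorem4p8:
  fixes M :: "'b measure"
    and Fil :: "nat \<Rightarrow> 'b measure"
    and F :: "'a::polish_space \<Rightarrow> ennreal"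
    and \<phi> :: "'a \<Rightarrow> 'a \<Rightarrow> real"
    and \<theta> :: "real \<Rightarrow> real"
    and x :: "nat \<Rightarrow> 'b \<Rightarrow> 'a"
    and \<zeta> \<xi> :: "nat \<Rightarrow> 'b \<Rightarrow> real"
    and K :: real
    and chi :: "real \<Rightarrow> nat"
    and \<Phi> :: "real \<Rightarrow> nat \<Rightarrow> real"
    and D :: "('b \<Rightarrow> 'a) set"
    and \<tau> :: "real \<Rightarrow> real"
    and \<rho> :: "real \<Rightarrow> real"
  assumes prob: "prob_space M"
    and filt_sub: "\<And>n. subalgebra M (Fil n)"
    and filt_mono: "\<And>m n. m \<le> n \<Longrightarrow> sets (Fil m) \<subseteq> sets (Fil n)"
    and F_meas: "F \<in> borel_measurable borel"
    and zer_closed: "closed {z. F z = 0}"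
    and zer_ne: "{z. F z = 0} \<noteq> {}"
    and phi_nonneg: "\<And>a b. \<phi> a b \<ge> 0"
    and phi_cont: "\<And>b. continuous_on UNIV (\<lambda>a. \<phi> a b)"
    and phi_meas: "\<And>a. (\<lambda>b. \<phi> a b) \<in> borel_measurable borel"
    and theta_nonneg: "\<And>e. e \<ge> 0 \<Longrightarrow> \<theta> e \<ge> 0"
    and theta_mono: "mono_on {0..} \<theta>"
    and theta_convex: "convex_on {0..} \<theta>"
    and theta_0: "\<theta> 0 = 0"
    and theta_pos: "\<And>e. e > 0 \<Longrightarrow> \<theta> e > 0"
    and consistent: "\<And>e a b. e > 0 \<Longrightarrow> \<phi> a b < \<theta> e \<Longrightarrow> dist a b < e"
    and adapted: "\<And>n. x n \<in> measurable (Fil n) borel"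
    and zeta_meas: "\<And>n. \<zeta> n \<in> borel_measurable (Fil n)"
    and zeta_nonneg: "\<And>n \<omega>. \<omega> \<in> space M \<Longrightarrow> \<zeta> n \<omega> \<ge> 0"
    and zeta_summable: "AE \<omega> in M. summable (\<lambda>n. \<zeta> n \<omega>)"
    and xi_meas: "\<And>n. \<xi> n \<in> borel_measurable (Fil n)"
    and xi_nonneg: "\<And>n \<omega>. \<omega> \<in> space M \<Longrightarrow> \<xi> n \<omega> \<ge> 0"
    and xi_summable: "AE \<omega> in M. summable (\<lambda>n. \<xi> n \<omega>)"
    and fejer: "\<And>n z. z \<in> measurable (Fil n) borel \<Longrightarrow> (AE \<omega> in M. F (z \<omega>) = 0) \<Longrightarrow>
        (\<integral>\<^sup>+ \<omega>. ennreal (\<phi> (z \<omega>) (x n \<omega>)) \<partial>M) < \<infinity> \<Longrightarrow>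
        AE \<omega> in M. nn_cond_exp M (Fil n) (\<lambda>\<omega>. ennreal (\<phi> (z \<omega>) (x (Suc n) \<omega>))) \<omega>
          \<le> ennreal ((1 + \<zeta> n \<omega>) * \<phi> (z \<omega>) (x n \<omega>) + \<xi> n \<omega>)"
    and K_pos: "K > 0"
    and K_bound: "AE \<omega> in M. (\<Prod>n. 1 + \<zeta> n \<omega>) < K"
    and chi: "\<And>e. e > 0 \<Longrightarrow> (\<Sum>n. \<integral>\<^sup>+ \<omega>. ennreal (\<xi> (n + chi e) \<omega>) \<partial>M) < ennreal e"
    and Phi_pos: "\<And>e N. e > 0 \<Longrightarrow> \<Phi> e N > 0"
    and liminf_bound: "\<And>e N. e > 0 \<Longrightarrow>
        \<exists>n. N \<le> n \<and> real n \<le> \<Phi> e N \<and> (\<integral>\<^sup>+ \<omega>. F (x n \<omega>) \<partial>M) < ennreal e"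
    and D_rv: "D \<subseteq> measurable M borel"
    and x_in_D: "\<And>n. x n \<in> D"
    and tau_pos: "\<And>e. e > 0 \<Longrightarrow> \<tau> e > 0"
    and tau_reg: "\<And>e y. e > 0 \<Longrightarrow> y \<in> D \<Longrightarrow> (\<integral>\<^sup>+ \<omega>. F (y \<omega>) \<partial>M) < ennreal (\<tau> e) \<Longrightarrow>
        (\<integral>\<^sup>+ \<omega>. ennreal (phi_dist \<phi> {z. F z = 0} (y \<omega>)) \<partial>M) < ennreal e"
    and rho_def: "\<And>e. \<rho> e = \<Phi> (\<tau> (e / (3 * K))) (chi (e / (3 * K)))"
  shows "\<exists>xl \<in> measurable M borel. (\<forall>\<omega>\<in>space M. F (xl \<omega>) = 0) \<and>
     ((\<lambda>n. \<integral>\<^sup>+ \<omega>. ennreal (dist (x n \<omega>) (xl \<omega>)) \<partial>M) \<longlonglongrightarrow> 0) \<and>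
     (AE \<omega> in M. (\<lambda>n. dist (x n \<omega>) (xl \<omega>)) \<longlonglongrightarrow> 0) \<and>
     (\<forall>e>0. \<forall>n. real n \<ge> \<rho> (\<theta> (e / 2)) \<longrightarrow>
        (\<integral>\<^sup>+ \<omega>. ennreal (dist (x n \<omega>) (xl \<omega>)) \<partial>M) < ennreal e) \<and>
     (\<forall>l>0. \<forall>e>0. measure M {\<omega> \<in> space M. \<exists>n. real n \<ge> \<rho> (l * \<theta> (e / 2)) \<and>
        dist (x n \<omega>) (xl \<omega>) \<ge> e} < l)"
proof -
  interpret T48 M Fil F \<phi> \<theta> x \<zeta> \<xi> K chi \<Phi> D \<tau>
  proof (rule T48.intro[OF prob], rule T48_axioms.intro)
  qed (rule assms; assumption?)+
  show ?thesis by (rule final[OF rho_def])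
qed

end
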